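(* Let $\mathcal O$ be the ring of integers of a finite extension of $\mathbb{Q}_p$ whose maximal ideal $\mathfrak m$ is a divided-power ideal, with residue field $\mathbb F$. Let $P,Q\in\mathcal O[X]$ be monic polynomials with $\bar P=\bar Q$ in $\mathbb F[X]$. Then for every $n\ge1$ and every symmetric function $f\in\Lambda$, $f(P_n)\equiv f(Q_n)\pmod{n\mathfrak m}$. In particular $p_n(P)\equiv p_n(Q)\pmod{n\mathfrak m}$ for all $n\ge1$.
   Context: $\bar P$ denotes reduction modulo $\mathfrak m$. An ideal $\mathfrak a$ of a torsion-free $\mathbb{Z}_{(p)}$-algebra $A$ is a divided-power ideal if $a^p\in p\,\mathfrak a$ for all $a\in\mathfrak a$. If $P$ has roots $\alpha_1,\dots,\alpha_d$ (with multiplicity) in an extension of $\mathcal O$, then $P_n:=\prod_{i=1}^d(X-\alpha_i^n)\in\mathcal O[X]$, and similarly $Q_n$. $\Lambda=\mathbb{Z}[e_1,e_2,\dots]$ is the ring of integral symmetric functions; for monic $R=X^d+a_1X^{d-1}+\dots+a_d$, $e_n(R)=(-1)^na_n$ for $1\le n\le d$, $e_n(R)=0$ for $n>d$, and $f(R)$ is obtained by writing $f$ as an integer polynomial in the $e_n$ and substituting $e_n(R)$ (equivalently, evaluating $f$ at the roots of $R$, padded by zeros). $p_n(P)=\sum_i\alpha_i^n$. *)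

theory Defs
  imports "HOL-Computational_Algebra.Polynomial" "Jordan_Normal_Form.Char_Poly"
begin

text \<open>Abstract characterisation of the ring of integers O of a finite extension of Q_p:
  a complete discrete valuation ring (uniformiser pi) of characteristic 0 whose residue
  field O/(pi) is finite of characteristic p.\<close>
definition padic_integer_ring :: "nat \<Rightarrow> 'a::idom \<Rightarrow> bool" where
  "padic_integer_ring p \<pi> \<longleftrightarrow>
     prime p \<and> \<pi> \<noteq> 0 \<and> \<not> \<pi> dvd 1 \<and>
     (\<forall>x. x \<noteq> 0 \<longrightarrow> (\<exists>u k. u dvd 1 \<and> x = u * \<pi> ^ k)) \<and>
     inj (of_nat :: nat \<Rightarrow> 'a) \<and>
     \<pi> dvd of_nat p \<and>
     (\<exists>S. finite S \<and> (\<forall>x. \<exists>s\<in>S. \<pi> dvd (x - s))) \<and>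
     (\<forall>x :: nat \<Rightarrow> 'a. (\<forall>n. \<pi> ^ n dvd (x (Suc n) - x n)) \<longrightarrow>
         (\<exists>y. \<forall>n. \<pi> ^ n dvd (y - x n)))"

definition divided_power_max_ideal :: "nat \<Rightarrow> 'a::idom \<Rightarrow> bool" where
  "divided_power_max_ideal p \<pi> \<longleftrightarrow> (\<forall>a. \<pi> dvd a \<longrightarrow> of_nat p * \<pi> dvd a ^ p)"

text \<open>Companion matrix of a monic polynomial; its eigenvalues are the roots of P.\<close>
definition companion :: "'a::comm_ring_1 poly \<Rightarrow> 'a mat" where
  "companion P = (let d = degree P in
     mat d d (\<lambda>(i,j). if j = d - 1 then - coeff P i else if i = j + 1 then 1 else 0))"

text \<open>P_n = prod_i (X - alpha_i^n), realised as the characteristic polynomial of C_P^n.\<close>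
definition pow_roots_poly :: "'a::comm_ring_1 poly \<Rightarrow> nat \<Rightarrow> 'a poly" where
  "pow_roots_poly P n = char_poly (companion P ^\<^sub>m n)"

text \<open>Power sum p_n(P) = sum_i alpha_i^n = trace (C_P^n).\<close>
definition power_sum_poly :: "'a::comm_ring_1 poly \<Rightarrow> nat \<Rightarrow> 'a" where
  "power_sum_poly P n = (\<Sum>i<degree P. (companion P ^\<^sub>m n) $$ (i, i))"

text \<open>Elements of Lambda = Z[e_1, e_2, ...] as integer polynomial expressions in the e_n.\<close>
datatype symfun = SConst int | SE nat | SAdd symfun symfun | SMul symfun symfun

definition elem_sym :: "'a::comm_ring_1 poly \<Rightarrow> nat \<Rightarrow> 'a" where
  "elem_sym R n = (if n \<le> degree R then (-1) ^ n * coeff R (degree R - n) else 0)"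

fun eval_symfun :: "symfun \<Rightarrow> 'a::comm_ring_1 poly \<Rightarrow> 'a" where
  "eval_symfun (SConst c) R = of_int c"
| "eval_symfun (SE n) R = elem_sym R n"
| "eval_symfun (SAdd f g) R = eval_symfun f R + eval_symfun g R"
| "eval_symfun (SMul f g) R = eval_symfun f R * eval_symfun g R"

end

theory Submission
  imports Defs "HOL-Computational_Algebra.Formal_Power_Series"
begin


locale dvr =
  fixes p :: nat and pi :: "'a::idom"
  assumes prime_p: "prime p"
    and pi_nz: "pi \<noteq> 0"
    and pi_nu: "\<not> pi dvd 1"
    and dvr_fact: "\<forall>x. x \<noteq> 0 \<longrightarrow> (\<exists>u k. u dvd 1 \<and> x = u * pi ^ k)"
    and inj_nat: "inj (of_nat :: nat \<Rightarrow> 'a)"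
    and pi_dvd_p: "pi dvd of_nat p"
    and dp: "of_nat p * pi dvd pi ^ p"
begin

lemma of_nat_nz: "m \<noteq> 0 \<Longrightarrow> (of_nat m :: 'a) \<noteq> 0"
  using inj_nat by (metis injD of_nat_0)

lemma pow_unit_imp: assumes "pi ^ k dvd 1" shows "k = 0"
proof (rule ccontr)
  assume "k \<noteq> 0"
  then have "pi dvd pi ^ k" by (simp add: dvd_power)
  with assms have "pi dvd 1" using dvd_trans by blast
  with pi_nu show False by simp
qed

lemma uniq: assumes "u dvd 1" "u' dvd 1" "u * pi ^ k = u' * pi ^ k'" shows "k = k'"
proof -
  have main: "k \<le> k'" if "u dvd 1" "u' dvd 1" "u * pi ^ k = u' * pi ^ k'" for u u' k k'
  proof (rule ccontr)
    assume "\<not> k \<le> k'"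
    then obtain j where j: "k = k' + Suc j" by (metis add_Suc_right less_imp_Suc_add not_le)
    have "u * pi ^ Suc j * pi ^ k' = u' * pi ^ k'" using that(3) j by (simp add: power_add ac_simps)
    then have "u * pi ^ Suc j = u'" using pi_nz by simp
    then have "pi ^ Suc j dvd u'" by (metis dvd_triv_right)
    then have "pi ^ Suc j dvd 1" using that(2) dvd_trans by blast
    then show False using pow_unit_imp by blast
  qed
  show ?thesis using main[OF assms] main[OF assms(2,1) assms(3)[symmetric]] by simp
qed

definition val :: "'a \<Rightarrow> nat" where
  "val x = (THE k. \<exists>u. u dvd 1 \<and> x = u * pi ^ k)"

lemma val_eq: assumes "u dvd 1" "x = u * pi ^ k" shows "val x = k"
  unfolding val_def
proof (rule the_equality)
  show "\<exists>u. u dvd 1 \<and> x = u * pi ^ k" using assms by blast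
  fix k' assume "\<exists>u. u dvd 1 \<and> x = u * pi ^ k'"
  then obtain u' where "u' dvd 1" "x = u' * pi ^ k'" by blast
  then show "k' = k" using uniq[of u' u k' k] assms by simp
qed

lemma val_rep: assumes "x \<noteq> 0" obtains u where "u dvd 1" "x = u * pi ^ val x"
proof -
  obtain u k where "u dvd 1" "x = u * pi ^ k" using dvr_fact assms by blast
  moreover from this have "val x = k" by (intro val_eq)
  ultimately show ?thesis using that by simp
qed

lemma val_mult: assumes "x \<noteq> 0" "y \<noteq> 0" shows "val (x * y) = val x + val y"
proof -
  obtain u where u: "u dvd 1" "x = u * pi ^ val x" using val_rep assms by blast
  obtain v where v: "v dvd 1" "y = v * pi ^ val y" using val_rep assms by blast
  have "x * y = (u * v) * pi ^ (val x + val y)" 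
    by (subst u(2), subst v(2)) (simp add: power_add mult_ac)
  moreover have "u * v dvd 1" using u v by simp
  ultimately show ?thesis by (intro val_eq)
qed

lemma val_unit: "u dvd 1 \<Longrightarrow> val u = 0"
  using val_eq[of u u 0] by simp

lemma val_pi_pow: "val (pi ^ k) = k"
  using val_eq[of 1 "pi ^ k" k] by simp

lemma val_pow: "x \<noteq> 0 \<Longrightarrow> val (x ^ k) = k * val x"
  by (induction k) (auto simp: val_mult val_unit)

lemma dvd_of_val: assumes "x \<noteq> 0" "y \<noteq> 0" "val x \<le> val y" shows "x dvd y"
proof -
  obtain u where u: "u dvd 1" "x = u * pi ^ val x" using val_rep assms by blast
  obtain v where v: "v dvd 1" "y = v * pi ^ val y" using val_rep assms by blast
  define k where "k = val x"
  have "x dvd pi ^ k" using u(1) by (subst u(2)[folded k_def]) (simp add: mult_unit_dvd_iff')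
  also have "pi ^ k dvd pi ^ val y" using assms(3) k_def by (simp add: le_imp_power_dvd)
  also have "pi ^ val y dvd y"
  proof -
    define k' where "k' = val y"
    have "pi ^ k' dvd y" by (subst v(2)[folded k'_def]) simp
    then show ?thesis using k'_def by simp
  qed
  finally show ?thesis .
qed

lemma val_of_dvd: assumes "x dvd y" "y \<noteq> 0" shows "val x \<le> val y"
proof -
  obtain z where z: "y = x * z" using assms by blast
  then have "x \<noteq> 0" "z \<noteq> 0" using assms by auto
  then show ?thesis using z val_mult by simp
qed

lemma unit_coprime: assumes "\<not> p dvd m" shows "(of_nat m :: 'a) dvd 1"
proof -
  have m: "m \<noteq> 0"
  proof
    assume "m = 0" then show False using assms by simp
  qed
  obtain u where u: "u dvd 1" "(of_nat m :: 'a) = u * pi ^ val (of_nat m)"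
    using val_rep of_nat_nz[OF m] by blast
  show ?thesis
  proof (cases "val (of_nat m :: 'a)")
    case 0 then show ?thesis using u by simp
  next
    case (Suc j)
    then have "pi dvd of_nat m" using u by (simp add: dvd_def)
    obtain x y where xy: "m * x = Suc (p * y)" using bezout_prime[OF prime_p assms] by blast
    have "(of_nat m :: 'a) * of_nat x = 1 + of_nat p * of_nat y"
      using arg_cong[OF xy, of "of_nat :: nat \<Rightarrow> 'a"] by simp
    moreover have "pi dvd of_nat m * of_nat x" using \<open>pi dvd of_nat m\<close> by simp
    moreover have "pi dvd of_nat p * of_nat y" using pi_dvd_p by simp
    moreover have "(1::'a) = of_nat m * of_nat x - of_nat p * of_nat y" using calculation(1) by simp
    ultimately have "pi dvd 1" by (metis dvd_diff)
    then show ?thesis using pi_nu by simp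
  qed
qed

definition e :: nat where "e = val (of_nat p)"

lemma p_pos: "p \<ge> 2" using prime_p by (simp add: prime_ge_2_nat)

lemma e_ge1: "e \<ge> 1"
proof -
  have p0: "(of_nat p :: 'a) \<noteq> 0" using of_nat_nz p_pos by simp
  have "val pi \<le> val (of_nat p :: 'a)" using val_of_dvd[OF pi_dvd_p p0] .
  then show ?thesis using val_pi_pow[of 1] by (simp add: e_def)
qed

lemma e_le: "e + 1 \<le> p"
proof -
  have p0: "(of_nat p :: 'a) \<noteq> 0" using of_nat_nz p_pos by simp
  have "val (of_nat p * pi) \<le> val (pi ^ p)" using val_of_dvd[OF dp] pi_nz by simp
  then show ?thesis using val_mult[OF p0 pi_nz] val_pi_pow[of 1] val_pi_pow[of p] by (simp add: e_def)
qed

definition vn :: "nat \<Rightarrow> nat" where "vn m = val (of_nat m :: 'a)"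

lemma vn_mult: "a \<noteq> 0 \<Longrightarrow> b \<noteq> 0 \<Longrightarrow> vn (a * b) = vn a + vn b"
  unfolding vn_def using val_mult of_nat_nz by (metis of_nat_mult)

lemma vn_coprime: "\<not> p dvd m \<Longrightarrow> vn m = 0"
  unfolding vn_def using unit_coprime val_unit by blast

lemma vn_fact_rec: "vn (fact m) = e * (m div p) + vn (fact (m div p))"
proof (induction m)
  case 0 then show ?case by simp
next
  case (Suc m)
  have f: "fact (Suc m) = Suc m * fact m" by simp
  have vs: "vn (fact (Suc m)) = vn (Suc m) + vn (fact m)"
    unfolding f by (rule vn_mult) (auto simp: fact_nonzero)
  show ?case
  proof (cases "p dvd Suc m")
    case True
    then obtain q where q: "Suc m = p * q" by blast
    have q0: "q \<noteq> 0"
    proof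
      assume "q = 0" then show False using q by simp
    qed
    have d1: "Suc m div p = q" using q p_pos by simp
    have d2: "m div p = q - 1"
    proof -
      have mm: "m = (p - 1) + p * (q - 1)" using q q0 p_pos
        by (cases q) (auto simp: algebra_simps)
      have "((p - 1) + p * (q - 1)) div p = (p - 1) div p + (q - 1)"
        using p_pos by (subst div_mult_self2) auto
      also have "(p - 1) div p = 0" using p_pos by simp
      finally show ?thesis using mm by simp
    qed
    have vq: "vn (Suc m) = e + vn q" unfolding q using vn_mult[of p q] p_pos q0
      by (simp add: e_def vn_def)
    have fq: "vn (fact q) = vn q + vn (fact (q - 1))"
    proof -
      have "fact q = q * fact (q - 1)" using q0 by (metis fact_nonzero fact_num_eq_if of_nat_id)
      then show ?thesis using vn_mult[of q "fact (q-1)"] q0 by (simp add: fact_nonzero)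
    qed
    have "e * q = e * (q - 1) + e" using q0 by (cases q) auto
    then show ?thesis using vs vq fq Suc.IH d1 d2 by simp
  next
    case False
    have "Suc m div p = m div p"
    proof -
      have "Suc m mod p \<noteq> 0" using False by (simp add: mod_eq_0_iff_dvd)
      then show ?thesis by (metis div_Suc mod_Suc) 
    qed
    then show ?thesis using vs vn_coprime[OF False] Suc.IH by simp
  qed
qed


lemma vn_fact_bound: "(p - 1) * vn (fact m) \<le> e * (m - 1)"
proof (induction m rule: less_induct)
  case (less m)
  define q where "q = m div p"
  have rec: "vn (fact m) = e * q + vn (fact q)" unfolding q_def by (rule vn_fact_rec)
  show ?case
  proof (cases "q = 0")
    case True
    then have "vn (fact q) = 0" by (simp add: vn_def val_unit)
    then show ?thesis using rec True by simp
  next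
    case False
    then have m0: "m > 0" unfolding q_def by (cases m) auto
    have qm: "q < m" unfolding q_def using m0 p_pos by (intro div_less_dividend) auto
    have IH: "(p - 1) * vn (fact q) \<le> e * (q - 1)" using less.IH[OF qm] .
    have pq: "p * q \<le> m" unfolding q_def by (rule times_div_less_eq_dividend)
    obtain p' where p': "p = Suc p'" using p_pos by (cases p) auto
    obtain q' where q': "q = Suc q'" using False by (cases q) auto
    have "(p - 1) * vn (fact m) = (p - 1) * (e * q) + (p - 1) * vn (fact q)"
      unfolding rec by (rule distrib_left)
    also have "\<dots> \<le> (p - 1) * (e * q) + e * (q - 1)" using IH by (rule add_left_mono)
    also have "(p - 1) * (e * q) + e * (q - 1) = e * (p * q - 1)"
    proof -
      have "(p - 1) * (e * q) + e * (q - 1) = p' * (e * Suc q') + e * q'" using p' q' by simp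
      also have "\<dots> = e * (Suc p' * Suc q' - 1)" by (simp add: algebra_simps)
      finally show ?thesis using p' q' by simp
    qed
    also have "e * (p * q - 1) \<le> e * (m - 1)" using pq by (intro mult_le_mono2 diff_le_mono)
    finally show ?thesis .
  qed
qed

lemma vn_fact_le: "vn (fact m) \<le> m - 1"
proof -
  have "e * (m - 1) \<le> (p - 1) * (m - 1)" using e_le by (intro mult_le_mono1) simp
  then have "(p - 1) * vn (fact m) \<le> (p - 1) * (m - 1)"
    using vn_fact_bound[of m] by linarith
  moreover have "p - 1 > 0" using p_pos by simp
  ultimately show ?thesis by simp
qed

lemma K1: assumes "c \<ge> 1" shows "of_nat c * pi dvd pi ^ c"
proof -
  have c0: "(of_nat c :: 'a) \<noteq> 0" using of_nat_nz assms by simp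
  have f0: "(of_nat (fact c) :: 'a) \<noteq> 0" using of_nat_nz by (simp add: fact_nonzero)
  have "c dvd fact c" using assms by (simp add: dvd_fact)
  then obtain k where k: "fact c = c * k" by (rule dvdE)
  have "(of_nat (fact c) :: 'a) = of_nat c * of_nat k" by (simp only: k of_nat_mult)
  then have "(of_nat c :: 'a) dvd of_nat (fact c)" by simp
  then have "vn c \<le> vn (fact c)" unfolding vn_def
    by (rule val_of_dvd[OF _ f0])
  then have "vn c \<le> c - 1" using vn_fact_le[of c] by simp
  then have "val (of_nat c * pi) \<le> val (pi ^ c)"
    using val_mult[OF c0 pi_nz] val_pi_pow[of 1] val_pi_pow[of c] assms by (simp add: vn_def)
  then show ?thesis using c0 pi_nz by (intro dvd_of_val) auto
qed

lemma fact_dvd: assumes "pi dvd y" shows "of_nat (fact m) dvd y ^ (m - 1)"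
proof (cases "y = 0")
  case True
  show ?thesis
  proof (cases "m \<le> 1")
    case True then show ?thesis by (auto simp: le_Suc_eq)
  next
    case False then have "m - 1 \<noteq> 0" by simp
    then show ?thesis using True by (simp add: power_0_left)
  qed
next
  case False
  have f0: "(of_nat (fact m) :: 'a) \<noteq> 0" using of_nat_nz by (simp add: fact_nonzero)
  have "val pi \<le> val y" using val_of_dvd[OF assms False] .
  then have "val y \<ge> 1" using val_pi_pow[of 1] by simp
  then have "val (y ^ (m - 1)) \<ge> m - 1" using val_pow[OF False] by simp
  then have "val (of_nat (fact m) :: 'a) \<le> val (y ^ (m - 1))"
    using vn_fact_le[of m] by (simp add: vn_def)
  then show ?thesis using f0 False by (intro dvd_of_val) auto
qed

end


definition cycf :: "(nat \<Rightarrow> nat \<Rightarrow> 'a::comm_monoid_mult) \<Rightarrow> nat list \<Rightarrow> 'a" where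
  "cycf f xs = (\<Prod>t<length xs. f (xs ! t) (xs ! ((t + 1) mod length xs)))"

definition Wd :: "nat \<Rightarrow> nat \<Rightarrow> nat list set" where
  "Wd D n = {xs. set xs \<subseteq> {0..<D} \<and> length xs = n}"

lemma finite_Wd: "finite (Wd D n)"
  unfolding Wd_def by (rule finite_lists_length_eq) simp

lemma mod_inj_aux: fixes t t' n r :: nat assumes "t \<le> t'" "t' < n" "(r + t) mod n = (r + t') mod n" shows "t = t'"
proof -
  have "n dvd (r + t') - (r + t)" using assms(1,3) by (subst mod_eq_dvd_iff_nat[symmetric]) auto
  then have "n dvd t' - t" by simp
  moreover have "t' - t < n" using assms by simp
  ultimately have "t' - t = 0" by (metis dvd_imp_le not_less zero_less_iff_neq_zero)
  then show ?thesis using assms(1) by simp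
qed

lemma mod_inj: fixes t t' n r :: nat assumes "t < n" "t' < n" "(r + t) mod n = (r + t') mod n" shows "t = t'"
  using mod_inj_aux[of t t' n r] mod_inj_aux[of t' t n r] assms by (cases "t \<le> t'") auto

lemma rot_bij: fixes n r :: nat assumes "n > 0" shows "bij_betw (\<lambda>t. (r + t) mod n) {..<n} {..<n}"
proof -
  have inj: "inj_on (\<lambda>t. (r + t) mod n) {..<n}"
    by (rule inj_onI) (auto intro: mod_inj)
  have sub: "(\<lambda>t. (r + t) mod n) ` {..<n} \<subseteq> {..<n}" using assms by (auto intro: mod_less_divisor)
  have "(\<lambda>t. (r + t) mod n) ` {..<n} = {..<n}"
    using endo_inj_surj[OF _ sub inj] by simp
  then show ?thesis using inj by (simp add: bij_betw_def)
qed

lemma cycf_rotate: assumes "length xs = n" "n > 0"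
  shows "cycf f (rotate r xs) = cycf f xs"
proof -
  define g where "g s = f (xs ! s) (xs ! ((s + 1) mod n))" for s
  have "cycf f (rotate r xs) = (\<Prod>t<n. g ((r + t) mod n))"
    unfolding cycf_def length_rotate assms(1)
  proof (rule prod.cong[OF refl])
    fix t assume t: "t \<in> {..<n}"
    have a: "rotate r xs ! t = xs ! ((r + t) mod n)" using t assms by (simp add: nth_rotate)
    have b: "rotate r xs ! ((t + 1) mod n) = xs ! ((r + (t + 1) mod n) mod n)"
      using t assms by (simp add: nth_rotate)
    have c1: "(r + (t + 1) mod n) mod n = (r + (t + 1)) mod n" by (rule mod_add_right_eq)
    have c2: "((r + t) mod n + 1) mod n = (r + t + 1) mod n" by (rule mod_add_left_eq)
    have c: "(r + (t + 1) mod n) mod n = ((r + t) mod n + 1) mod n"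
      unfolding c1 c2 by (simp add: add.assoc)
    show "f (rotate r xs ! t) (rotate r xs ! ((t + 1) mod n)) = g ((r + t) mod n)"
      unfolding g_def a b c ..
  qed
  also have "\<dots> = (\<Prod>t<n. g t)" by (rule prod.reindex_bij_betw[OF rot_bij[OF assms(2)]])
  also have "\<dots> = cycf f xs" unfolding cycf_def g_def assms(1) ..
  finally show ?thesis .
qed

lemma prod_pi_dvd: fixes c :: "'a::comm_monoid_mult"
  assumes "finite T" "\<forall>t\<in>T. c dvd g t"
  shows "c ^ card T dvd prod g T"
proof -
  have "(\<Prod>t\<in>T. c) dvd prod g T" using assms(2) by (intro prod_dvd_prod) auto
  then show ?thesis by simp
qed

lemma necklace:
  fixes pi :: "'a::comm_ring_1" and f :: "nat \<Rightarrow> nat \<Rightarrow> 'a"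
  assumes K1: "\<And>c. c \<ge> 1 \<Longrightarrow> of_nat c * pi dvd pi ^ c"
    and mk: "\<And>a b. a < D \<Longrightarrow> b < D \<Longrightarrow> mk a \<Longrightarrow> pi dvd f a b"
    and n: "n > 0"
  shows "of_nat n * pi dvd (\<Sum>xs\<in>{xs\<in>Wd D n. \<exists>t<n. mk (xs ! t)}. cycf f xs)"
proof -
  define Z where "Z = {xs\<in>Wd D n. \<exists>t<n. mk (xs ! t)}"
  define orb where "orb xs = (\<lambda>r. rotate r xs) ` {..<n}" for xs :: "nat list"
  define stab where "stab xs = {r\<in>{..<n}. rotate r xs = xs}" for xs :: "nat list"
  have finZ: "finite Z" unfolding Z_def using finite_Wd by simp
  have lenZ: "length xs = n" if "xs \<in> Z" for xs using that unfolding Z_def Wd_def by simp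
  have rotZ: "rotate r xs \<in> Z" if "xs \<in> Z" for xs r
  proof -
    from that obtain t where t: "t < n" "mk (xs ! t)" and W: "xs \<in> Wd D n" unfolding Z_def by blast
    have len: "length xs = n" using W unfolding Wd_def by simp
    define t' where "t' = (t + (n - r mod n)) mod n"
    have t'n: "t' < n" unfolding t'_def using n by simp
    have "(r + t') mod n = t"
    proof -
      have "(r + t') mod n = (r mod n + (t + (n - r mod n))) mod n"
        unfolding t'_def by (simp add: mod_add_right_eq mod_add_left_eq)
      also have "r mod n + (t + (n - r mod n)) = t + n"
      proof -
        have "r mod n < n" using n by simp
        then show ?thesis by linarith
      qed
      also have "(t + n) mod n = t" using t by simp
      finally show ?thesis .
    qed
    then have "rotate r xs ! t' = xs ! t" using t'n len n by (simp add: nth_rotate)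
    then have "mk (rotate r xs ! t')" using t by simp
    moreover have "rotate r xs \<in> Wd D n" using W unfolding Wd_def by simp
    ultimately show ?thesis unfolding Z_def using t'n by blast
  qed
  have rot_mod: "rotate r xs = rotate (r mod n) xs" if "xs \<in> Z" for xs r
    using rotate_conv_mod[of r xs] lenZ[OF that] by simp
  have self: "xs \<in> orb xs" if "xs \<in> Z" for xs
    unfolding orb_def using n by (intro image_eqI[of _ _ 0]) auto
  have orbZ: "orb xs \<subseteq> Z" if "xs \<in> Z" for xs unfolding orb_def using rotZ[OF that] by auto
  have orb_eq: "orb ys = orb xs" if xZ: "xs \<in> Z" and yO: "ys \<in> orb xs" for xs ys
  proof -
    obtain r where r: "r < n" "ys = rotate r xs" using yO unfolding orb_def by auto
    have "orb ys \<subseteq> orb xs"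
    proof
      fix zs assume "zs \<in> orb ys"
      then obtain s where s: "s < n" "zs = rotate s ys" unfolding orb_def by auto
      have "zs = rotate (s + r) xs" using s r by (simp add: rotate_rotate)
      also have "\<dots> = rotate ((s + r) mod n) xs" using rot_mod[OF xZ] by simp
      finally show "zs \<in> orb xs" unfolding orb_def using n by auto
    qed
    moreover have "orb xs \<subseteq> orb ys"
    proof
      fix zs assume "zs \<in> orb xs"
      then obtain s where s: "s < n" "zs = rotate s xs" unfolding orb_def by auto
      have "rotate (s + (n - r)) ys = rotate (s + (n - r) + r) xs" using r by (simp add: rotate_rotate)
      also have "s + (n - r) + r = s + n" using r by simp
      also have "rotate (s + n) xs = rotate s xs"
        using rot_mod[OF xZ, of "s + n"] rot_mod[OF xZ, of s] by simp
      finally have "zs = rotate ((s + (n - r)) mod n) ys"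
        using s rotZ[OF xZ, of r] r rot_mod[of ys "s + (n - r)"] by simp
      then show "zs \<in> orb ys" unfolding orb_def using n by auto
    qed
    ultimately show ?thesis by blast
  qed
  have cyc_orb: "cycf f ys = cycf f xs" if "xs \<in> Z" "ys \<in> orb xs" for xs ys
    using that cycf_rotate[OF lenZ[OF that(1)] n] unfolding orb_def by auto
  have fin_orb: "finite (orb xs)" for xs unfolding orb_def by simp
  have fin_stab: "finite (stab xs)" for xs unfolding stab_def by simp
  have orbstab: "card (orb xs) * card (stab xs) = n" if xZ: "xs \<in> Z" for xs
  proof -
    define fib where "fib ys = {r\<in>{..<n}. rotate r xs = ys}" for ys
    have U: "{..<n} = (\<Union>ys\<in>orb xs. fib ys)" unfolding fib_def orb_def by auto
    have "n = card (\<Union>ys\<in>orb xs. fib ys)" using U by (metis card_lessThan)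
    also have "\<dots> = (\<Sum>ys\<in>orb xs. card (fib ys))"
      by (rule card_UN_disjoint) (auto simp: fin_orb fib_def)
    also have "\<dots> = (\<Sum>ys\<in>orb xs. card (stab xs))"
    proof (rule sum.cong[OF refl])
      fix ys assume "ys \<in> orb xs"
      then obtain r0 where r0: "r0 < n" "ys = rotate r0 xs" unfolding orb_def by auto
      have inj: "inj_on (\<lambda>h. (r0 + h) mod n) (stab xs)"
        by (rule inj_onI) (auto simp: stab_def intro: mod_inj)
      have "fib ys = (\<lambda>h. (r0 + h) mod n) ` stab xs"
      proof
        show "(\<lambda>h. (r0 + h) mod n) ` stab xs \<subseteq> fib ys"
        proof
          fix r assume "r \<in> (\<lambda>h. (r0 + h) mod n) ` stab xs"
          then obtain h where h: "h < n" "rotate h xs = xs" "r = (r0 + h) mod n"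
            unfolding stab_def by auto
          have "rotate r xs = rotate (r0 + h) xs" using h rot_mod[OF xZ, of "r0 + h"] by simp
          also have "\<dots> = rotate r0 (rotate h xs)" by (simp add: rotate_rotate)
          also have "\<dots> = ys" using h r0 by simp
          finally show "r \<in> fib ys" unfolding fib_def using h n by simp
        qed
        show "fib ys \<subseteq> (\<lambda>h. (r0 + h) mod n) ` stab xs"
        proof
          fix r assume "r \<in> fib ys"
          then have r: "r < n" "rotate r xs = rotate r0 xs" unfolding fib_def using r0 by auto
          define h where "h = (r + (n - r0)) mod n"
          have "rotate h xs = rotate (r + (n - r0)) xs" unfolding h_def using rot_mod[OF xZ] by simp
          also have "\<dots> = rotate (n - r0) (rotate r xs)" by (simp add: rotate_rotate add.commute)
          also have "\<dots> = rotate (n - r0) (rotate r0 xs)" using r by simp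
          also have "\<dots> = rotate n xs" using r0 by (simp add: rotate_rotate)
          also have "\<dots> = xs" using lenZ[OF xZ] by simp
          finally have hs: "h \<in> stab xs" unfolding stab_def h_def using n by simp
          have "(r0 + h) mod n = (r0 + (r + (n - r0))) mod n" unfolding h_def by (simp add: mod_add_right_eq)
          also have "r0 + (r + (n - r0)) = r + n" using r0 by simp
          also have "(r + n) mod n = r" using r by simp
          finally show "r \<in> (\<lambda>h. (r0 + h) mod n) ` stab xs" using hs by (metis image_eqI)
        qed
      qed
      then show "card (fib ys) = card (stab xs)" using card_image[OF inj] by simp
    qed
    also have "\<dots> = card (orb xs) * card (stab xs)" by simp
    finally show ?thesis by simp
  qed
  have single: "of_nat (card (stab xs)) * pi dvd cycf f xs" if "xs \<in> Z" for xs
  proof -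
    from that obtain t0 where t0: "t0 < n" "mk (xs ! t0)" and W: "xs \<in> Wd D n" unfolding Z_def by blast
    have len: "length xs = n" and setx: "set xs \<subseteq> {0..<D}" using W unfolding Wd_def by auto
    have letter: "xs ! t < D" if "t < n" for t using setx that len by (auto simp: nth_mem subset_iff)
    define T where "T = {t\<in>{..<n}. mk (xs ! t)}"
    define g where "g t = f (xs ! t) (xs ! ((t + 1) mod n))" for t
    have finT: "finite T" unfolding T_def by simp
    have inj: "inj_on (\<lambda>h. (h + t0) mod n) (stab xs)"
      by (rule inj_onI) (auto simp: stab_def add.commute[of _ t0] intro: mod_inj)
    have sub: "(\<lambda>h. (h + t0) mod n) ` stab xs \<subseteq> T"
    proof
      fix s assume "s \<in> (\<lambda>h. (h + t0) mod n) ` stab xs"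
      then obtain h where h: "h < n" "rotate h xs = xs" "s = (h + t0) mod n" unfolding stab_def by auto
      have "rotate h xs ! t0 = xs ! ((h + t0) mod n)" using t0(1) len by (simp add: nth_rotate)
      then have "xs ! s = rotate h xs ! t0" using h(3) by simp
      also have "\<dots> = xs ! t0" using h(2) by simp
      finally show "s \<in> T" unfolding T_def using t0 h n by simp
    qed
    have cs: "card (stab xs) \<le> card T"
      using card_mono[OF finT sub] card_image[OF inj] by simp
    have cs1: "card (stab xs) \<ge> 1"
    proof -
      have "0 \<in> stab xs" unfolding stab_def using n by simp
      then show ?thesis using fin_stab[of xs] by (metis One_nat_def Suc_leI card_gt_0_iff empty_iff)
    qed
    have "cycf f xs = prod g {..<n}" unfolding cycf_def g_def len ..
    also have "\<dots> = prod g ({..<n} - T) * prod g T"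
      by (rule prod.subset_diff) (auto simp: T_def)
    also have "\<dots> = prod g T * prod g ({..<n} - T)" by (rule mult.commute)
    finally have cyc: "cycf f xs = prod g T * prod g ({..<n} - T)" .
    have "pi ^ card T dvd prod g T"
    proof (rule prod_pi_dvd[OF finT], intro ballI)
      fix t assume "t \<in> T"
      then have "t < n" "mk (xs ! t)" unfolding T_def by auto
      then show "pi dvd g t" unfolding g_def using n by (intro mk letter) auto
    qed
    then have "pi ^ card (stab xs) dvd prod g T" using cs by (meson dvd_trans le_imp_power_dvd)
    then have "of_nat (card (stab xs)) * pi dvd prod g T" using K1[OF cs1] dvd_trans by blast
    then show ?thesis unfolding cyc by simp
  qed
  have Zu: "\<Union>(orb ` Z) = Z"
  proof
    show "\<Union>(orb ` Z) \<subseteq> Z" using orbZ by auto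
    show "Z \<subseteq> \<Union>(orb ` Z)" using self by auto
  qed
  have "(\<Sum>xs\<in>Z. cycf f xs) = (\<Sum>Ob\<in>orb ` Z. \<Sum>ys\<in>Ob. cycf f ys)"
  proof -
    have "(\<Sum>xs\<in>\<Union>(orb ` Z). cycf f xs) = (sum \<circ> sum) (cycf f) (orb ` Z)"
    proof (rule sum.Union_disjoint)
      show "\<forall>A\<in>orb ` Z. finite A" using fin_orb by simp
      show "\<forall>A\<in>orb ` Z. \<forall>B\<in>orb ` Z. A \<noteq> B \<longrightarrow> A \<inter> B = {}"
      proof (intro ballI impI)
        fix A B assume A: "A \<in> orb ` Z" and B: "B \<in> orb ` Z" and AB: "A \<noteq> B"
        obtain xs where xs: "xs \<in> Z" "A = orb xs" using A by auto
        obtain ys where ys: "ys \<in> Z" "B = orb ys" using B by auto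
        show "A \<inter> B = {}"
        proof (rule ccontr)
          assume "A \<inter> B \<noteq> {}"
          then obtain zs where zs: "zs \<in> orb xs" "zs \<in> orb ys" using xs(2) ys(2) by blast
          have "orb zs = orb xs" by (rule orb_eq[OF xs(1) zs(1)])
          moreover have "orb zs = orb ys" by (rule orb_eq[OF ys(1) zs(2)])
          ultimately have "A = B" using xs(2) ys(2) by simp
          then show False using AB by simp
        qed
      qed
    qed
    then show ?thesis unfolding Zu by simp
  qed
  also have "of_nat n * pi dvd \<dots>"
  proof (rule dvd_sum)
    fix Ob assume "Ob \<in> orb ` Z"
    then obtain xs where xs: "xs \<in> Z" "Ob = orb xs" by auto
    have "(\<Sum>ys\<in>Ob. cycf f ys) = (\<Sum>ys\<in>orb xs. cycf f xs)"
      unfolding xs(2) by (rule sum.cong[OF refl]) (rule cyc_orb[OF xs(1)])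
    also have "\<dots> = of_nat (card (orb xs)) * cycf f xs" by simp
    also have "of_nat n * pi dvd \<dots>"
    proof -
      have "of_nat n * pi = of_nat (card (orb xs)) * (of_nat (card (stab xs)) * pi)"
        using orbstab[OF xs(1)] by (metis mult.assoc of_nat_mult)
      then show ?thesis using single[OF xs(1)] by (simp add: mult_dvd_mono)
    qed
    finally show "of_nat n * pi dvd (\<Sum>ys\<in>Ob. cycf f ys)" .
  qed
  finally show ?thesis unfolding Z_def .
qed


definition tr :: "'a::comm_ring_1 mat \<Rightarrow> 'a" where
  "tr A = (\<Sum>i<dim_row A. A $$ (i, i))"

lemma mult_entry: assumes "A \<in> carrier_mat a b" "B \<in> carrier_mat b c" "i < a" "j < c"
  shows "(A * B) $$ (i, j) = (\<Sum>l<b. A $$ (i, l) * B $$ (l, j))"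
  using assms by (auto simp: scalar_prod_def lessThan_atLeast0 intro!: sum.cong)

lemma snoc_W: "Wd D (Suc m) = (\<lambda>(ks, k). ks @ [k]) ` (Wd D m \<times> {0..<D})"
proof
  show "(\<lambda>(ks, k). ks @ [k]) ` (Wd D m \<times> {0..<D}) \<subseteq> Wd D (Suc m)" unfolding Wd_def by auto
  show "Wd D (Suc m) \<subseteq> (\<lambda>(ks, k). ks @ [k]) ` (Wd D m \<times> {0..<D})"
  proof
    fix xs assume xs: "xs \<in> Wd D (Suc m)"
    then have ne: "xs \<noteq> []" unfolding Wd_def by auto
    have e: "xs = butlast xs @ [last xs]" using ne by simp
    have "butlast xs \<in> Wd D m" using xs unfolding Wd_def by (auto dest: in_set_butlastD)
    moreover have "last xs \<in> {0..<D}" using xs last_in_set[OF ne] unfolding Wd_def by auto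
    ultimately show "xs \<in> (\<lambda>(ks, k). ks @ [k]) ` (Wd D m \<times> {0..<D})"
      using e by (intro image_eqI[of _ _ "(butlast xs, last xs)"]) auto
  qed
qed

lemma cons_W: "Wd D (Suc m) = (\<lambda>(ks, k). k # ks) ` (Wd D m \<times> {0..<D})"
  unfolding Wd_def by (rule lists_length_Suc_eq)

lemma inj_snoc: "inj_on (\<lambda>(ks, k). ks @ [k]) X" by (rule inj_onI) auto
lemma inj_cons: "inj_on (\<lambda>(ks, k). k # ks) X" by (rule inj_onI) auto

lemma path_formula:
  fixes A :: "'a::comm_ring_1 mat"
  assumes A: "A \<in> carrier_mat D D" and i: "i < D" and j: "j < D"
  shows "(A ^\<^sub>m Suc m) $$ (i, j) = (\<Sum>ks\<in>Wd D m. \<Prod>t\<le>m. A $$ ((i # ks) ! t, (ks @ [j]) ! t))"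
  using j
proof (induction m arbitrary: j)
  case 0
  have W0: "Wd D 0 = {[]}" unfolding Wd_def by auto
  show ?case using A i 0 by (simp add: W0)
next
  case (Suc m)
  have "(A ^\<^sub>m Suc (Suc m)) $$ (i, j) = (A ^\<^sub>m Suc m * A) $$ (i, j)" by simp
  also have "\<dots> = (\<Sum>k<D. (A ^\<^sub>m Suc m) $$ (i, k) * A $$ (k, j))"
    by (rule mult_entry[OF pow_carrier_mat[OF A] A i Suc.prems])
  also have "\<dots> = (\<Sum>k<D. \<Sum>ks\<in>Wd D m. (\<Prod>t\<le>m. A $$ ((i # ks) ! t, (ks @ [k]) ! t)) * A $$ (k, j))"
  proof (rule sum.cong[OF refl])
    fix k assume "k \<in> {..<D}"
    then have "(A ^\<^sub>m Suc m) $$ (i, k) = (\<Sum>ks\<in>Wd D m. \<Prod>t\<le>m. A $$ ((i # ks) ! t, (ks @ [k]) ! t))"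
      by (intro Suc.IH) simp
    then show "(A ^\<^sub>m Suc m) $$ (i, k) * A $$ (k, j) = (\<Sum>ks\<in>Wd D m. (\<Prod>t\<le>m. A $$ ((i # ks) ! t, (ks @ [k]) ! t)) * A $$ (k, j))"
      by (simp only: sum_distrib_right)
  qed
  also have "\<dots> = (\<Sum>(ks, k)\<in>Wd D m \<times> {0..<D}. (\<Prod>t\<le>m. A $$ ((i # ks) ! t, (ks @ [k]) ! t)) * A $$ (k, j))"
    by (subst sum.swap) (simp add: sum.cartesian_product lessThan_atLeast0)
  also have "\<dots> = (\<Sum>(ks, k)\<in>Wd D m \<times> {0..<D}. \<Prod>t\<le>Suc m. A $$ ((i # ks @ [k]) ! t, (ks @ [k] @ [j]) ! t))"
  proof (rule sum.cong[OF refl], clarify)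
    fix ks k assume ks: "ks \<in> Wd D m" and k: "k \<in> {0..<D}"
    have len: "length ks = m" using ks unfolding Wd_def by simp
    have "(\<Prod>t\<le>Suc m. A $$ ((i # ks @ [k]) ! t, (ks @ [k] @ [j]) ! t))
        = (\<Prod>t\<le>m. A $$ ((i # ks @ [k]) ! t, (ks @ [k] @ [j]) ! t)) * A $$ ((i # ks @ [k]) ! Suc m, (ks @ [k] @ [j]) ! Suc m)"
      by (rule prod.atMost_Suc)
    also have "(i # ks @ [k]) ! Suc m = k" using len by (simp add: nth_append)
    also have "(ks @ [k] @ [j]) ! Suc m = j" using len by (simp add: nth_append)
    also have "(\<Prod>t\<le>m. A $$ ((i # ks @ [k]) ! t, (ks @ [k] @ [j]) ! t))
        = (\<Prod>t\<le>m. A $$ ((i # ks) ! t, (ks @ [k]) ! t))"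
    proof (rule prod.cong[OF refl])
      fix t assume t: "t \<in> {..m}"
      have a: "(i # ks @ [k]) ! t = (i # ks) ! t"
        using t len by (simp add: nth_append flip: append_Cons)
      have b: "(ks @ [k] @ [j]) ! t = (ks @ [k]) ! t"
        using t len by (simp add: nth_append flip: append_assoc)
      show "A $$ ((i # ks @ [k]) ! t, (ks @ [k] @ [j]) ! t) = A $$ ((i # ks) ! t, (ks @ [k]) ! t)"
        unfolding a b ..
    qed
    finally show "(\<Prod>t\<le>m. A $$ ((i # ks) ! t, (ks @ [k]) ! t)) * A $$ (k, j)
       = (\<Prod>t\<le>Suc m. A $$ ((i # ks @ [k]) ! t, (ks @ [k] @ [j]) ! t))" by simp
  qed
  also have "\<dots> = (\<Sum>ks\<in>Wd D (Suc m). \<Prod>t\<le>Suc m. A $$ ((i # ks) ! t, (ks @ [j]) ! t))"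
    unfolding snoc_W by (subst sum.reindex[OF inj_snoc]) (simp add: case_prod_beta)
  finally show ?case .
qed

lemma trace_word:
  fixes A :: "'a::comm_ring_1 mat"
  assumes A: "A \<in> carrier_mat D D" and n: "n > 0"
  shows "tr (A ^\<^sub>m n) = (\<Sum>xs\<in>Wd D n. cycf (\<lambda>a b. A $$ (a, b)) xs)"
proof -
  obtain m where m: "n = Suc m" using n by (cases n) auto
  have "tr (A ^\<^sub>m n) = (\<Sum>i<D. (A ^\<^sub>m Suc m) $$ (i, i))" unfolding tr_def m using A by simp
  also have "\<dots> = (\<Sum>i<D. \<Sum>ks\<in>Wd D m. \<Prod>t\<le>m. A $$ ((i # ks) ! t, (ks @ [i]) ! t))"
    by (rule sum.cong[OF refl]) (rule path_formula[OF A], auto)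
  also have "\<dots> = (\<Sum>(ks, i)\<in>Wd D m \<times> {0..<D}. \<Prod>t\<le>m. A $$ ((i # ks) ! t, (ks @ [i]) ! t))"
    by (subst sum.swap) (simp add: sum.cartesian_product lessThan_atLeast0)
  also have "\<dots> = (\<Sum>(ks, i)\<in>Wd D m \<times> {0..<D}. cycf (\<lambda>a b. A $$ (a, b)) (i # ks))"
  proof (rule sum.cong[OF refl], clarify)
    fix ks i assume ks: "ks \<in> Wd D m"
    have len: "length ks = m" using ks unfolding Wd_def by simp
    show "(\<Prod>t\<le>m. A $$ ((i # ks) ! t, (ks @ [i]) ! t)) = cycf (\<lambda>a b. A $$ (a, b)) (i # ks)"
      unfolding cycf_def
    proof (rule prod.cong)
      show "{..m} = {..<length (i # ks)}" using len by auto
      fix t assume t: "t \<in> {..<length (i # ks)}"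
      have "(ks @ [i]) ! t = (i # ks) ! ((t + 1) mod length (i # ks))"
      proof (cases "t < m")
        case True then show ?thesis using len by (simp add: nth_append)
      next
        case False then have "t = m" using t len by simp
        then show ?thesis using len by (simp add: nth_append)
      qed
      then show "A $$ ((i # ks) ! t, (ks @ [i]) ! t) = A $$ ((i # ks) ! t, (i # ks) ! ((t + 1) mod length (i # ks)))"
        by simp
    qed
  qed
  also have "\<dots> = (\<Sum>xs\<in>Wd D n. cycf (\<lambda>a b. A $$ (a, b)) xs)"
    unfolding m cons_W by (subst sum.reindex[OF inj_cons]) (simp add: case_prod_beta)
  finally show ?thesis .
qed

lemma trace_comm: assumes A: "A \<in> carrier_mat a b" and B: "B \<in> carrier_mat b a"
  shows "tr (A * B) = tr (B * A)"
proof -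
  have "tr (A * B) = (\<Sum>i<a. (A * B) $$ (i, i))" unfolding tr_def using A by simp
  also have "\<dots> = (\<Sum>i<a. \<Sum>l<b. A $$ (i, l) * B $$ (l, i))"
    by (rule sum.cong[OF refl]) (rule mult_entry[OF A B], auto)
  also have "\<dots> = (\<Sum>l<b. \<Sum>i<a. B $$ (l, i) * A $$ (i, l))"
    by (subst sum.swap) (simp add: mult.commute)
  also have "\<dots> = (\<Sum>l<b. (B * A) $$ (l, l))"
    by (rule sum.cong[OF refl]) (rule mult_entry[OF B A, symmetric], auto)
  also have "\<dots> = tr (B * A)" unfolding tr_def using B by simp
  finally show ?thesis .
qed

lemma pow_RS: assumes R: "R \<in> carrier_mat a b" and S: "S \<in> carrier_mat b a"
  shows "(R * S) ^\<^sub>m Suc m = R * ((S * R) ^\<^sub>m m * S)"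
proof (induction m)
  case 0
  have "(R * S) ^\<^sub>m Suc 0 = R * S" using R S by simp
  moreover have "(S * R) ^\<^sub>m 0 * S = S" using R S by simp
  ultimately show ?case by simp
next
  case (Suc m)
  have SR: "S * R \<in> carrier_mat b b" using R S by simp
  have P: "(S * R) ^\<^sub>m m \<in> carrier_mat b b" using SR by simp
  have "(R * S) ^\<^sub>m Suc (Suc m) = (R * S) ^\<^sub>m Suc m * (R * S)" by simp
  also have "\<dots> = R * ((S * R) ^\<^sub>m m * S) * (R * S)" using Suc.IH by simp
  also have "\<dots> = R * ((S * R) ^\<^sub>m m * S * (R * S))"
  proof -
    have P2: "(S * R) ^\<^sub>m m * S \<in> carrier_mat b a" using mult_carrier_mat[OF P S] .
    have RS: "R * S \<in> carrier_mat a a" using R S by simp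
    show ?thesis by (rule assoc_mult_mat[OF R P2 RS])
  qed
  also have "(S * R) ^\<^sub>m m * S * (R * S) = (S * R) ^\<^sub>m m * (S * R) * S"
  proof -
    have "(S * R) ^\<^sub>m m * S * (R * S) = (S * R) ^\<^sub>m m * (S * (R * S))"
      using R S P by (simp add: assoc_mult_mat[of _ b b _ a _ a])
    also have "S * (R * S) = (S * R) * S" using R S by (simp add: assoc_mult_mat[of S b a R b S a])
    also have "(S * R) ^\<^sub>m m * ((S * R) * S) = (S * R) ^\<^sub>m m * (S * R) * S"
      using R S P SR by (simp add: assoc_mult_mat[of _ b b _ b _ a])
    finally show ?thesis .
  qed
  also have "(S * R) ^\<^sub>m m * (S * R) = (S * R) ^\<^sub>m Suc m" by simp
  finally show ?case .
qed

lemma tr_pow_RS: assumes R: "R \<in> carrier_mat a b" and S: "S \<in> carrier_mat b a" and n: "n > 0"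
  shows "tr ((R * S) ^\<^sub>m n) = tr ((S * R) ^\<^sub>m n)"
proof -
  obtain m where m: "n = Suc m" using n by (cases n) auto
  have SR: "S * R \<in> carrier_mat b b" using R S by simp
  have P: "(S * R) ^\<^sub>m m * S \<in> carrier_mat b a" using mult_carrier_mat[OF pow_carrier_mat[OF SR] S] .
  have "tr ((R * S) ^\<^sub>m n) = tr (R * ((S * R) ^\<^sub>m m * S))" unfolding m pow_RS[OF R S] ..
  also have "\<dots> = tr (((S * R) ^\<^sub>m m * S) * R)" by (rule trace_comm[OF R P])
  also have "((S * R) ^\<^sub>m m * S) * R = (S * R) ^\<^sub>m m * (S * R)"
    using R S SR by (simp add: assoc_mult_mat[of _ b b S a R b])
  also have "\<dots> = (S * R) ^\<^sub>m n" unfolding m by simp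
  finally show ?thesis .
qed

lemma trace_cong:
  fixes pp :: "'a::comm_ring_1" and M N :: "'a mat"
  assumes K1: "\<And>c. c \<ge> 1 \<Longrightarrow> of_nat c * pp dvd pp ^ c"
    and M: "M \<in> carrier_mat d d" and N: "N \<in> carrier_mat d d"
    and cong: "\<And>i j. i < d \<Longrightarrow> j < d \<Longrightarrow> pp dvd M $$ (i, j) - N $$ (i, j)"
    and n: "n > 0"
  shows "of_nat n * pp dvd tr (M ^\<^sub>m n) - tr (N ^\<^sub>m n)"
proof -
  define E where "E i j = (SOME e. M $$ (i, j) - N $$ (i, j) = pp * e)" for i j
  have E: "M $$ (i, j) = N $$ (i, j) + pp * E i j" if "i < d" "j < d" for i j
  proof -
    have "\<exists>e. M $$ (i, j) - N $$ (i, j) = pp * e" using cong[OF that] by (auto elim: dvdE)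
    then have "M $$ (i, j) - N $$ (i, j) = pp * E i j" unfolding E_def by (rule someI_ex)
    then have "M $$ (i, j) = pp * E i j + N $$ (i, j)" by (rule diff_eq_eq[THEN iffD1])
    then show ?thesis by (simp only: add.commute)
  qed
  define R where "R = mat (2 * d) d (\<lambda>(a, k). if a < d then N $$ (a, k) else pp * E (a - d) k)"
  define S :: "'a mat" where "S = mat d (2 * d) (\<lambda>(k, b). if b = k \<or> b = k + d then 1 else 0)"
  have R: "R \<in> carrier_mat (2 * d) d" unfolding R_def by simp
  have S: "S \<in> carrier_mat d (2 * d)" unfolding S_def by simp
  define bb where "bb b = (if b < d then b else b - d)" for b
  have H: "(R * S) $$ (a, b) = R $$ (a, bb b)" if ab: "a < 2 * d" "b < 2 * d" for a b
  proof -
    have "(R * S) $$ (a, b) = (\<Sum>k<d. R $$ (a, k) * S $$ (k, b))" by (rule mult_entry[OF R S ab])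
    also have "\<dots> = (\<Sum>k<d. if k = bb b then R $$ (a, k) else 0)"
      by (rule sum.cong[OF refl]) (use ab in \<open>auto simp: S_def bb_def\<close>)
    also have "\<dots> = R $$ (a, bb b)"
    proof -
      have "bb b < d" unfolding bb_def using ab(2) by (cases "b < d") arith+
      then show ?thesis by simp
    qed
    finally show ?thesis .
  qed
  have SR: "S * R = M"
  proof (rule eq_matI)
    fix k j assume k: "k < dim_row M" and j: "j < dim_col M"
    then have k': "k < d" "j < d" using M by auto
    have "(S * R) $$ (k, j) = (\<Sum>a<2 * d. S $$ (k, a) * R $$ (a, j))" by (rule mult_entry[OF S R k'])
    also have "\<dots> = (\<Sum>a<2 * d. (if a = k then R $$ (a, j) else 0) + (if a = k + d then R $$ (a, j) else 0))"
      by (rule sum.cong[OF refl]) (use k' in \<open>auto simp: S_def\<close>)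
    also have "\<dots> = R $$ (k, j) + R $$ (k + d, j)" using k' by (simp add: sum.distrib)
    also have "\<dots> = M $$ (k, j)" using k' E by (simp add: R_def)
    finally show "(S * R) $$ (k, j) = M $$ (k, j)" .
  qed (use M S R in auto)
  have RS: "R * S \<in> carrier_mat (2 * d) (2 * d)" using R S by simp
  have trM: "tr (M ^\<^sub>m n) = (\<Sum>xs\<in>Wd (2 * d) n. cycf (\<lambda>a b. (R * S) $$ (a, b)) xs)"
    using tr_pow_RS[OF R S n] trace_word[OF RS n] SR by simp
  have trN: "tr (N ^\<^sub>m n) = (\<Sum>xs\<in>Wd d n. cycf (\<lambda>a b. N $$ (a, b)) xs)" by (rule trace_word[OF N n])
  define Zm where "Zm = {xs\<in>Wd (2 * d) n. \<exists>t<n. d \<le> xs ! t}"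
  have split: "Wd (2 * d) n = Wd d n \<union> Zm"
  proof
    show "Wd (2 * d) n \<subseteq> Wd d n \<union> Zm"
    proof
      fix xs assume xs: "xs \<in> Wd (2 * d) n"
      show "xs \<in> Wd d n \<union> Zm"
      proof (cases "\<exists>t<n. d \<le> xs ! t")
        case True then show ?thesis using xs unfolding Zm_def by auto
      next
        case False
        then have "set xs \<subseteq> {0..<d}" using xs unfolding Wd_def
          by (auto simp: in_set_conv_nth) (meson not_le)
        then show ?thesis using xs unfolding Wd_def by auto
      qed
    qed
    show "Wd d n \<union> Zm \<subseteq> Wd (2 * d) n" unfolding Zm_def Wd_def by auto
  qed
  have disj: "Wd d n \<inter> Zm = {}"
    unfolding Zm_def Wd_def by (auto simp: subset_iff nth_mem) (meson atLeastLessThan_iff nth_mem not_le)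
  have eqN: "(\<Sum>xs\<in>Wd d n. cycf (\<lambda>a b. (R * S) $$ (a, b)) xs) = (\<Sum>xs\<in>Wd d n. cycf (\<lambda>a b. N $$ (a, b)) xs)"
  proof (rule sum.cong[OF refl])
    fix xs assume xs: "xs \<in> Wd d n"
    have lt: "xs ! t < d" if "t < n" for t using xs that unfolding Wd_def by (auto simp: subset_iff nth_mem)
    show "cycf (\<lambda>a b. (R * S) $$ (a, b)) xs = cycf (\<lambda>a b. N $$ (a, b)) xs"
      unfolding cycf_def
    proof (rule prod.cong[OF refl])
      fix t assume t: "t \<in> {..<length xs}"
      have len: "length xs = n" using xs unfolding Wd_def by simp
      have a: "xs ! t < d" using lt t len by simp
      have b: "xs ! ((t + 1) mod length xs) < d" using lt len n by simp
      show "(R * S) $$ (xs ! t, xs ! ((t + 1) mod length xs)) = N $$ (xs ! t, xs ! ((t + 1) mod length xs))"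
        using H[of "xs ! t" "xs ! ((t + 1) mod length xs)"] a b by (simp add: bb_def R_def)
    qed
  qed
  have finW: "finite (Wd d n)" "finite Zm" using finite_Wd unfolding Zm_def by auto
  have "tr (M ^\<^sub>m n) = (\<Sum>xs\<in>Wd d n. cycf (\<lambda>a b. (R * S) $$ (a, b)) xs) + (\<Sum>xs\<in>Zm. cycf (\<lambda>a b. (R * S) $$ (a, b)) xs)"
    unfolding trM split by (rule sum.union_disjoint[OF finW disj])
  then have diff: "tr (M ^\<^sub>m n) - tr (N ^\<^sub>m n) = (\<Sum>xs\<in>Zm. cycf (\<lambda>a b. (R * S) $$ (a, b)) xs)"
    using trN eqN by simp
  have "of_nat n * pp dvd (\<Sum>xs\<in>{xs\<in>Wd (2 * d) n. \<exists>t<n. (\<lambda>a. d \<le> a) (xs ! t)}. cycf (\<lambda>a b. (R * S) $$ (a, b)) xs)"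
  proof (rule necklace[OF K1 _ n])
    fix a b assume ab: "a < 2 * d" "b < 2 * d" "d \<le> a"
    have "bb b < d" unfolding bb_def using ab(2) by (cases "b < d") arith+
    then show "pp dvd (R * S) $$ (a, b)" using H[OF ab(1,2)] ab by (simp add: R_def)
  qed
  then show ?thesis using diff unfolding Zm_def by simp
qed


lemma const_poly_hom: "comm_ring_hom (\<lambda>a::'a::comm_ring_1. [:a:])"
  by unfold_locales (auto simp: one_pCons)

lemma newton_mat:
  fixes X :: "'a::idom mat"
  assumes X: "X \<in> carrier_mat d d"
  defines "c \<equiv> \<lambda>i. coeff (char_poly X) i"
  defines "pw \<equiv> \<lambda>k. tr (X ^\<^sub>m k)"
  shows "\<exists>B\<ge>K. (\<forall>j. of_nat (Suc j) * c (Suc j) = (\<Sum>r<B. c (Suc j + r) * pw r))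
            \<and> (- c 0 * of_nat d = (\<Sum>r<B. c (Suc r) * pw (Suc r)))"
proof -
  interpret ch: comm_ring_hom "\<lambda>a::'a. [:a:]" by (rule const_poly_hom)
  define chi where "chi = char_poly X"
  define Lam where "Lam = char_poly_matrix X"
  define Adj where "Adj = adj_mat Lam"
  define Xp where "Xp = map_mat (\<lambda>a. [:a:]) X"
  have Lam: "Lam \<in> carrier_mat d d" unfolding Lam_def using X by simp
  have Adj: "Adj \<in> carrier_mat d d" unfolding Adj_def using adj_mat(1)[OF Lam] .
  have Xp: "Xp \<in> carrier_mat d d" unfolding Xp_def using X by simp
  have LA: "Lam * Adj = chi \<cdot>\<^sub>m 1\<^sub>m d"
    unfolding Adj_def chi_def char_poly_def Lam_def[symmetric] using adj_mat(2)[OF Lam] .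
  have Xpk: "Xp ^\<^sub>m k = map_mat (\<lambda>a. [:a:]) (X ^\<^sub>m k)" for k
    unfolding Xp_def using ch.mat_hom_pow[OF X] by simp
  have L: "[:0, 1:] * Adj $$ (i, j) = (if i = j then chi else 0) + (Xp * Adj) $$ (i, j)"
    if ij: "i < d" "j < d" for i j
  proof -
    have "(Lam * Adj) $$ (i, j) = (\<Sum>l<d. Lam $$ (i, l) * Adj $$ (l, j))" by (rule mult_entry[OF Lam Adj ij])
    also have "\<dots> = (\<Sum>l<d. (if i = l then [:0, 1:] * Adj $$ (l, j) else 0) - [:X $$ (i, l):] * Adj $$ (l, j))"
      by (rule sum.cong[OF refl]) (use ij X in \<open>auto simp: Lam_def char_poly_matrix_def algebra_simps\<close>)
    also have "\<dots> = [:0, 1:] * Adj $$ (i, j) - (\<Sum>l<d. Xp $$ (i, l) * Adj $$ (l, j))"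
      using ij X by (simp add: sum_subtractf Xp_def)
    also have "(\<Sum>l<d. Xp $$ (i, l) * Adj $$ (l, j)) = (Xp * Adj) $$ (i, j)"
      by (rule mult_entry[OF Xp Adj ij, symmetric])
    finally have "(Lam * Adj) $$ (i, j) = [:0, 1:] * Adj $$ (i, j) - (Xp * Adj) $$ (i, j)" .
    moreover have "(Lam * Adj) $$ (i, j) = (if i = j then chi else 0)" using ij unfolding LA by simp
    ultimately show ?thesis by (simp add: eq_diff_eq)
  qed
  define T where "T k = tr (Xp ^\<^sub>m k * Adj)" for k
  have Tsum: "T k = (\<Sum>i<d. \<Sum>l<d. [:(X ^\<^sub>m k) $$ (i, l):] * Adj $$ (l, i))" for k
  proof -
    have P: "Xp ^\<^sub>m k \<in> carrier_mat d d" using Xp by simp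
    have "T k = (\<Sum>i<d. (Xp ^\<^sub>m k * Adj) $$ (i, i))" unfolding T_def tr_def using P Xp by simp
    also have "\<dots> = (\<Sum>i<d. \<Sum>l<d. (Xp ^\<^sub>m k) $$ (i, l) * Adj $$ (l, i))"
      by (rule sum.cong[OF refl]) (rule mult_entry[OF P Adj], auto)
    also have "\<dots> = (\<Sum>i<d. \<Sum>l<d. [:(X ^\<^sub>m k) $$ (i, l):] * Adj $$ (l, i))"
      using X by (intro sum.cong refl) (simp add: Xpk)
    finally show ?thesis .
  qed
  have L3: "[:0, 1:] * T k = chi * [:pw k:] + T (Suc k)" for k
  proof -
    have P: "Xp ^\<^sub>m k \<in> carrier_mat d d" using Xp by simp
    have XA: "Xp * Adj \<in> carrier_mat d d" using Xp Adj by simp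
    have "[:0, 1:] * T k = (\<Sum>i<d. \<Sum>l<d. [:(X ^\<^sub>m k) $$ (i, l):] * ([:0, 1:] * Adj $$ (l, i)))"
      unfolding Tsum by (simp add: sum_distrib_left mult_ac)
    also have "\<dots> = (\<Sum>i<d. \<Sum>l<d. [:(X ^\<^sub>m k) $$ (i, l):] * (if l = i then chi else 0)
                      + [:(X ^\<^sub>m k) $$ (i, l):] * (Xp * Adj) $$ (l, i))"
    proof (intro sum.cong refl)
      fix i l assume "i \<in> {..<d}" "l \<in> {..<d}"
      then have "[:0, 1:] * Adj $$ (l, i) = (if l = i then chi else 0) + (Xp * Adj) $$ (l, i)"
        by (intro L) auto
      then show "[:(X ^\<^sub>m k) $$ (i, l):] * ([:0, 1:] * Adj $$ (l, i)) =
        [:(X ^\<^sub>m k) $$ (i, l):] * (if l = i then chi else 0) + [:(X ^\<^sub>m k) $$ (i, l):] * (Xp * Adj) $$ (l, i)"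
        by (simp only: distrib_left)
    qed
    also have "\<dots> = (\<Sum>i<d. [:(X ^\<^sub>m k) $$ (i, i):] * chi) + (\<Sum>i<d. \<Sum>l<d. (Xp ^\<^sub>m k) $$ (i, l) * (Xp * Adj) $$ (l, i))"
      using X by (simp add: sum.distrib Xpk if_distrib[of "\<lambda>x. _ * x"] sum.delta' cong: if_cong)
    also have "(\<Sum>i<d. [:(X ^\<^sub>m k) $$ (i, i):] * chi) = chi * [:pw k:]"
    proof -
      have "(\<Sum>i<d. [:(X ^\<^sub>m k) $$ (i, i):]) = [:pw k:]"
        unfolding pw_def tr_def using X ch.hom_sum[of "\<lambda>i. (X ^\<^sub>m k) $$ (i, i)" "{..<d}"] by simp
      then have "(\<Sum>i<d. [:(X ^\<^sub>m k) $$ (i, i):] * chi) = [:pw k:] * chi"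
        by (simp only: sum_distrib_right[symmetric])
      then show ?thesis by (simp only: mult.commute)
    qed
    also have "(\<Sum>i<d. \<Sum>l<d. (Xp ^\<^sub>m k) $$ (i, l) * (Xp * Adj) $$ (l, i)) = (\<Sum>i<d. (Xp ^\<^sub>m k * (Xp * Adj)) $$ (i, i))"
      by (rule sum.cong[OF refl]) (rule mult_entry[OF P XA, symmetric], auto)
    also have "Xp ^\<^sub>m k * (Xp * Adj) = Xp ^\<^sub>m Suc k * Adj"
      using P Xp Adj by (simp add: assoc_mult_mat[OF P Xp Adj])
    also have "(\<Sum>i<d. (Xp ^\<^sub>m Suc k * Adj) $$ (i, i)) = T (Suc k)"
      unfolding T_def tr_def using Xp by simp
    finally show ?thesis .
  qed
  define tau where "tau k j = coeff (T k) j" for k j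
  have rec0: "tau (Suc k) 0 = - c 0 * pw k" for k
  proof -
    have "coeff ([:0, 1:] * T k) 0 = coeff (chi * [:pw k:] + T (Suc k)) 0" using L3 by simp
    then show ?thesis unfolding tau_def c_def chi_def by (simp add: eq_neg_iff_add_eq_0 add.commute mult.commute)
  qed
  have recS: "tau k j = c (Suc j) * pw k + tau (Suc k) (Suc j)" for k j
  proof -
    have "coeff ([:0, 1:] * T k) (Suc j) = coeff (chi * [:pw k:] + T (Suc k)) (Suc j)" using L3 by simp
    then show ?thesis unfolding tau_def c_def chi_def by simp
  qed
  have iter: "tau k j = (\<Sum>r<s. c (Suc j + r) * pw (k + r)) + tau (k + s) (j + s)" for s k j
  proof (induction s arbitrary: k j)
    case 0 then show ?case by simp
  next
    case (Suc s)
    have "tau k j = c (Suc j) * pw k + tau (Suc k) (Suc j)" by (rule recS)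
    also have "tau (Suc k) (Suc j) = (\<Sum>r<s. c (Suc (Suc j) + r) * pw (Suc k + r)) + tau (Suc k + s) (Suc j + s)"
      by (rule Suc.IH)
    finally have e: "tau k j = c (Suc j) * pw k + ((\<Sum>r<s. c (Suc (Suc j) + r) * pw (Suc k + r)) + tau (Suc k + s) (Suc j + s))" .
    have sh: "(\<Sum>r<Suc s. c (Suc j + r) * pw (k + r)) = c (Suc j) * pw k + (\<Sum>r<s. c (Suc (Suc j) + r) * pw (Suc k + r))"
      by (simp only: sum.lessThan_Suc_shift) simp
    show ?case unfolding sh e by (simp only: add.assoc add_Suc_right add_Suc)
  qed
  define B where "B = (\<Sum>l<d. \<Sum>i<d. degree (Adj $$ (l, i)))"
  have vanish: "tau k j = 0" if "j > B" for k j
  proof -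
    have "tau k j = (\<Sum>i<d. \<Sum>l<d. (X ^\<^sub>m k) $$ (i, l) * coeff (Adj $$ (l, i)) j)"
      unfolding tau_def Tsum by (simp add: coeff_sum)
    also have "\<dots> = 0"
    proof (intro sum.neutral ballI)
      fix i l assume i: "i \<in> {..<d}" and l: "l \<in> {..<d}"
      have "degree (Adj $$ (l, i)) \<le> (\<Sum>i<d. degree (Adj $$ (l, i)))"
        using i by (intro member_le_sum) auto
      also have "\<dots> \<le> B" unfolding B_def using l by (intro member_le_sum) auto
      finally have "coeff (Adj $$ (l, i)) j = 0" using that by (intro coeff_eq_0) simp
      then show "(X ^\<^sub>m k) $$ (i, l) * coeff (Adj $$ (l, i)) j = 0" by simp
    qed
    finally show ?thesis .
  qed
  have T0: "T 0 = pderiv chi"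
  proof -
    have "T 0 = (\<Sum>i<d. Adj $$ (i, i))" unfolding T_def tr_def using Xp Adj by simp
    also have "\<dots> = (\<Sum>i<d. char_poly (mat_delete X i i))"
    proof (rule sum.cong[OF refl])
      fix i assume i: "i \<in> {..<d}"
      have "Adj $$ (i, i) = cofactor Lam i i" unfolding Adj_def adj_mat_def using Lam i by simp
      also have "\<dots> = det (mat_delete Lam i i)" unfolding cofactor_def by simp
      also have "mat_delete Lam i i = char_poly_matrix (mat_delete X i i)"
        unfolding Lam_def char_poly_matrix_def using X i by (intro eq_matI) (auto simp: mat_delete_def)
      finally show "Adj $$ (i, i) = char_poly (mat_delete X i i)" unfolding char_poly_def .
    qed
    also have "\<dots> = pderiv chi" unfolding chi_def by (rule pderiv_char_poly[OF X, symmetric])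
    finally show ?thesis .
  qed
  show ?thesis
  proof (intro exI[of _ "Suc B + K"] conjI allI)
    show "K \<le> Suc B + K" by simp
  next
    fix j
    have "tau 0 j = (\<Sum>r<Suc B + K. c (Suc j + r) * pw (0 + r)) + tau (0 + (Suc B + K)) (j + (Suc B + K))" by (rule iter)
    also have "tau (0 + (Suc B + K)) (j + (Suc B + K)) = 0" by (rule vanish) simp
    finally have "tau 0 j = (\<Sum>r<Suc B + K. c (Suc j + r) * pw r)" by simp
    moreover have "tau 0 j = of_nat (Suc j) * c (Suc j)" unfolding tau_def T0 c_def chi_def by (simp add: coeff_pderiv)
    ultimately show "of_nat (Suc j) * c (Suc j) = (\<Sum>r<Suc B + K. c (Suc j + r) * pw r)" by simp
  next
    have "tau 1 0 = (\<Sum>r<Suc B + K. c (Suc 0 + r) * pw (1 + r)) + tau (1 + (Suc B + K)) (0 + (Suc B + K))" by (rule iter)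
    also have "tau (1 + (Suc B + K)) (0 + (Suc B + K)) = 0" by (rule vanish) simp
    finally have "tau 1 0 = (\<Sum>r<Suc B + K. c (Suc r) * pw (Suc r))" by simp
    moreover have "tau 1 0 = - c 0 * pw 0" using rec0[of 0] by simp
    moreover have "pw 0 = of_nat d" unfolding pw_def tr_def using X by simp
    ultimately show "- c 0 * of_nat d = (\<Sum>r<Suc B + K. c (Suc r) * pw (Suc r))" by simp
  qed
qed


lemma newton_rec:
  fixes X :: "'a::idom mat"
  assumes X: "X \<in> carrier_mat d d" and m: "1 \<le> m" "m \<le> d"
  shows "of_nat m * coeff (char_poly X) (d - m) + (\<Sum>l<m. coeff (char_poly X) (d - l) * tr (X ^\<^sub>m (m - l))) = 0"
proof -
  define c where "c i = coeff (char_poly X) i" for i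
  define pw where "pw k = tr (X ^\<^sub>m k)" for k
  have deg: "degree (char_poly X) = d" using degree_monic_char_poly[OF X] by simp
  have cz: "c i = 0" if "i > d" for i unfolding c_def using that deg by (intro coeff_eq_0) simp
  obtain B where B: "B \<ge> Suc d"
    and n1: "\<forall>j. of_nat (Suc j) * c (Suc j) = (\<Sum>r<B. c (Suc j + r) * pw r)"
    and n2: "- c 0 * of_nat d = (\<Sum>r<B. c (Suc r) * pw (Suc r))"
    using newton_mat[OF X, of "Suc d"] unfolding c_def pw_def by blast
  define h where "h r = c (d - m + r) * pw r" for r
  have S: "(\<Sum>l<m. c (d - l) * pw (m - l)) = (\<Sum>i<m. h (Suc i))"
  proof -
    have "(\<Sum>l<m. c (d - l) * pw (m - l)) = (\<Sum>l<m. h (Suc (m - Suc l)))"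
    proof (rule sum.cong[OF refl])
      fix l assume "l \<in> {..<m}"
      then have l: "l < m" by simp
      have "Suc (m - Suc l) = m - l" using l by simp
      moreover have "d - m + (m - l) = d - l" using l m by simp
      ultimately show "c (d - l) * pw (m - l) = h (Suc (m - Suc l))" unfolding h_def by simp
    qed
    also have "\<dots> = (\<Sum>i<m. h (Suc i))" by (rule sum.nat_diff_reindex)
    finally show ?thesis .
  qed
  show ?thesis
  proof (cases "m < d")
    case True
    define j where "j = d - m - 1"
    have j: "Suc j = d - m" unfolding j_def using True by simp
    have "of_nat (d - m) * c (d - m) = (\<Sum>r<B. h r)"
      using n1[rule_format, of j] unfolding j h_def by simp
    also have "\<dots> = (\<Sum>r<Suc m. h r)"
    proof (rule sum.mono_neutral_right)
      show "finite {..<B}" by simp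
      show "{..<Suc m} \<subseteq> {..<B}" using B m by auto
      show "\<forall>i\<in>{..<B} - {..<Suc m}. h i = 0" unfolding h_def using m by (auto intro!: cz)
    qed
    also have "\<dots> = h 0 + (\<Sum>i<m. h (Suc i))" by (rule sum.lessThan_Suc_shift)
    also have "h 0 = c (d - m) * of_nat d" unfolding h_def pw_def tr_def using X by simp
    finally have e: "of_nat (d - m) * c (d - m) = c (d - m) * of_nat d + (\<Sum>i<m. h (Suc i))" .
    have "of_nat d = (of_nat (d - m) + of_nat m :: 'a)" using m by (simp flip: of_nat_add)
    then have "of_nat m * c (d - m) + (\<Sum>i<m. h (Suc i)) = 0"
      using e by (simp add: algebra_simps)
    then show ?thesis using S unfolding c_def pw_def by simp
  next
    case False
    then have md: "m = d" using m by simp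
    have "(\<Sum>r<B. c (Suc r) * pw (Suc r)) = (\<Sum>r<d. c (Suc r) * pw (Suc r))"
    proof (rule sum.mono_neutral_right)
      show "finite {..<B}" by simp
      show "{..<d} \<subseteq> {..<B}" using B by auto
      show "\<forall>i\<in>{..<B} - {..<d}. c (Suc i) * pw (Suc i) = 0" by (auto intro!: cz)
    qed
    moreover have "(\<Sum>i<m. h (Suc i)) = (\<Sum>r<d. c (Suc r) * pw (Suc r))" unfolding h_def md by simp
    ultimately have "(\<Sum>i<m. h (Suc i)) = - (c 0 * of_nat m)" using n2 md by simp
    then have "of_nat m * c 0 + (\<Sum>i<m. h (Suc i)) = 0" by (simp add: mult.commute)
    then show ?thesis using S md unfolding c_def pw_def by simp
  qed
qed


definition cong1 :: "'a::comm_ring_1 \<Rightarrow> 'a fps \<Rightarrow> bool" where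
  "cong1 c f \<longleftrightarrow> fps_nth f 0 = 1 \<and> (\<forall>N\<ge>1. c dvd fps_nth f N)"

lemma cong1_mult: assumes "cong1 c f" "cong1 c g" shows "cong1 c (f * g)"
  unfolding cong1_def
proof (intro conjI allI impI)
  show "fps_nth (f * g) 0 = 1" using assms unfolding cong1_def by simp
  fix N :: nat assume N: "N \<ge> 1"
  show "c dvd fps_nth (f * g) N" unfolding fps_mult_nth
  proof (rule dvd_sum)
    fix i assume i: "i \<in> {0..N}"
    show "c dvd fps_nth f i * fps_nth g (N - i)"
    proof (cases "i \<ge> 1")
      case True then show ?thesis using assms unfolding cong1_def by simp
    next
      case False then have "N - i \<ge> 1" using N by simp
      then show ?thesis using assms unfolding cong1_def by simp
    qed
  qed
qed

lemma cong1_one: "cong1 c 1" unfolding cong1_def by simp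

lemma exp_piece:
  fixes c w :: "'a::idom"
  assumes inj: "inj (of_nat :: nat \<Rightarrow> 'a)" and i: "i \<ge> 1"
    and FD: "\<And>m. \<exists>q. of_nat (fact m) * q = w ^ m \<and> (m \<ge> 1 \<longrightarrow> c dvd q)"
  shows "\<exists>E. cong1 c E \<and> fps_X * fps_deriv E = E * (fps_const (of_nat i * w) * fps_X ^ i)"
proof -
  define q where "q m = (SOME q. of_nat (fact m) * q = w ^ m \<and> (m \<ge> 1 \<longrightarrow> c dvd q))" for m
  have q: "of_nat (fact m) * q m = w ^ m" "m \<ge> 1 \<Longrightarrow> c dvd q m" for m
    using someI_ex[OF FD[of m]] unfolding q_def by auto
  have fnz: "(of_nat (fact m) :: 'a) \<noteq> 0" for m
    using inj fact_nonzero[of m] by (metis injD of_nat_0)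
  have q0: "q 0 = 1" using q(1)[of 0] by simp
  have qrec: "of_nat m * q m = w * q (m - 1)" if m: "m \<ge> 1" for m
  proof -
    have "(fact m :: nat) = m * fact (m - 1)" using m by (cases m) simp_all
    then have fm: "(of_nat (fact m) :: 'a) = of_nat m * of_nat (fact (m - 1))" by (metis of_nat_mult)
    have "of_nat (fact (m - 1)) * (of_nat m * q m) = of_nat (fact m) * q m" unfolding fm by (simp add: mult_ac)
    also have "\<dots> = w ^ m" by (rule q)
    also have "\<dots> = w * w ^ (m - 1)" using m by (cases m) simp_all
    also have "\<dots> = of_nat (fact (m - 1)) * (w * q (m - 1))" using q(1)[of "m - 1"] by (simp add: mult_ac)
    finally show ?thesis using fnz[of "m - 1"] by (rule mult_left_cancel[THEN iffD1, rotated])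
  qed
  define E where "E = Abs_fps (\<lambda>N. if i dvd N then q (N div i) else (0::'a))"
  have E0: "fps_nth E 0 = 1" unfolding E_def using q0 by simp
  have cE: "cong1 c E" unfolding cong1_def
  proof (intro conjI allI impI)
    show "fps_nth E 0 = 1" by (rule E0)
    fix N :: nat assume N: "N \<ge> 1"
    show "c dvd fps_nth E N"
    proof (cases "i dvd N")
      case True
      then have "N div i \<ge> 1" using N i by (auto elim!: dvdE)
      then show ?thesis unfolding E_def using True q(2) by simp
    next
      case False then show ?thesis unfolding E_def by simp
    qed
  qed
  have deriv: "fps_X * fps_deriv E = E * (fps_const (of_nat i * w) * fps_X ^ i)"
  proof (rule fps_ext)
    fix N
    have rhs: "fps_nth (E * (fps_const (of_nat i * w) * fps_X ^ i)) N = (if N < i then 0 else of_nat i * w * fps_nth E (N - i))"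
    proof -
      have "E * (fps_const (of_nat i * w) * fps_X ^ i) = fps_const (of_nat i * w) * (E * fps_X ^ i)"
        by (simp only: mult.left_commute)
      then show ?thesis by (simp only:) (simp add: fps_X_power_mult_right_nth mult.assoc)
    qed
    have lhs: "fps_nth (fps_X * fps_deriv E) N = of_nat N * fps_nth E N"
      by (cases N) (simp_all add: E0)
    show "fps_nth (fps_X * fps_deriv E) N = fps_nth (E * (fps_const (of_nat i * w) * fps_X ^ i)) N"
      unfolding lhs rhs
    proof (cases "i dvd N")
      case True
      then obtain m where m: "N = i * m" by (auto elim!: dvdE)
      show "of_nat N * fps_nth E N = (if N < i then 0 else of_nat i * w * fps_nth E (N - i))"
      proof (cases "m = 0")
        case True then show ?thesis using m i by simp
      next
        case False
        then have m1: "m \<ge> 1" by simp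
        have Nm: "\<not> N < i" using m m1 i by (simp add: not_less)
        have ENi: "fps_nth E (N - i) = q (m - 1)"
        proof -
          have "N - i = i * (m - 1)" using m m1 by (simp add: algebra_simps)
          then show ?thesis unfolding E_def using i by simp
        qed
        have EN: "fps_nth E N = q m" unfolding E_def using m i by simp
        have Nim: "(of_nat N :: 'a) = of_nat i * of_nat m" using m by simp
        have "of_nat N * fps_nth E N = of_nat i * (of_nat m * q m)" unfolding EN Nim by (simp only: mult.assoc)
        also have "\<dots> = of_nat i * w * q (m - 1)" using qrec[OF m1] by (simp add: mult_ac)
        finally show ?thesis using Nm ENi by simp
      qed
    next
      case False
      have EN: "fps_nth E N = 0" unfolding E_def using False by simp
      have ENi: "\<not> N < i \<Longrightarrow> fps_nth E (N - i) = 0"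
      proof -
        assume "\<not> N < i"
        then have Ni: "N = (N - i) + i" by simp
        have "\<not> i dvd (N - i)"
        proof
          assume "i dvd (N - i)"
          then have "i dvd (N - i) + i" by simp
          then show False using False Ni by simp
        qed
        then show "fps_nth E (N - i) = 0" unfolding E_def by simp
      qed
      show "of_nat N * fps_nth E N = (if N < i then 0 else of_nat i * w * fps_nth E (N - i))"
        using EN ENi by simp
    qed
  qed
  show ?thesis using cE deriv by blast
qed

lemma trunc_agree: fixes f g h :: "'a::comm_ring_1 fps" assumes "\<forall>i\<le>d. fps_nth f i = fps_nth g i" "m \<le> d"
  shows "fps_nth (h * f) m = fps_nth (h * g) m"
  unfolding fps_mult_nth using assms by (intro sum.cong) auto

lemma Xderiv_nth: fixes f :: "'a::comm_ring_1 fps" shows "fps_nth (fps_X * fps_deriv f) m = of_nat m * fps_nth f m"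
  by (cases m) simp_all

lemma conv_last: fixes f :: "'a::comm_ring_1 fps" shows "fps_nth (f * Abs_fps (\<lambda>i. if i = 0 then 0 else u i)) m = (\<Sum>l<m. fps_nth f l * u (m - l))"
proof -
  have "fps_nth (f * Abs_fps (\<lambda>i. if i = 0 then 0 else u i)) m
      = (\<Sum>l<Suc m. fps_nth f l * (if m - l = 0 then 0 else u (m - l)))"
    unfolding fps_mult_nth by (simp add: atLeast0AtMost lessThan_Suc_atMost)
  also have "\<dots> = (\<Sum>l<m. fps_nth f l * (if m - l = 0 then 0 else u (m - l)))" by simp
  also have "\<dots> = (\<Sum>l<m. fps_nth f l * u (m - l))" by (intro sum.cong) auto
  finally show ?thesis .
qed

lemma conv_first: fixes g :: "'a::comm_ring_1 fps" shows "fps_nth (Abs_fps a * g) m = a m * fps_nth g 0 + (\<Sum>l<m. a l * fps_nth g (m - l))"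
proof -
  have "fps_nth (Abs_fps a * g) m = (\<Sum>l<Suc m. a l * fps_nth g (m - l))"
    unfolding fps_mult_nth by (simp add: atLeast0AtMost lessThan_Suc_atMost)
  then show ?thesis by (simp add: add.commute)
qed

lemma integrality:
  fixes a b u v w :: "nat \<Rightarrow> 'a::idom" and c :: 'a
  assumes inj: "inj (of_nat :: nat \<Rightarrow> 'a)"
    and FD: "\<And>m x. c dvd x \<Longrightarrow> \<exists>q. of_nat (fact m) * q = x ^ m \<and> (m \<ge> 1 \<longrightarrow> c dvd q)"
    and a0: "a 0 = 1" and b0: "b 0 = 1"
    and na: "\<And>m. 1 \<le> m \<Longrightarrow> m \<le> d \<Longrightarrow> of_nat m * a m + (\<Sum>l<m. a l * u (m - l)) = 0"
    and nb: "\<And>m. 1 \<le> m \<Longrightarrow> m \<le> d \<Longrightarrow> of_nat m * b m + (\<Sum>l<m. b l * v (m - l)) = 0"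
    and uv: "\<And>i. 1 \<le> i \<Longrightarrow> i \<le> d \<Longrightarrow> u i - v i = of_nat i * w i"
    and wc: "\<And>i. 1 \<le> i \<Longrightarrow> i \<le> d \<Longrightarrow> c dvd w i"
    and md: "m \<le> d"
  shows "c dvd a m - b m"
proof -
  have "\<forall>i. \<exists>E. 1 \<le> i \<longrightarrow> i \<le> d \<longrightarrow> cong1 c E \<and> fps_X * fps_deriv E = E * (fps_const (of_nat i * w i) * fps_X ^ i)"
  proof
    fix i
    show "\<exists>E. 1 \<le> i \<longrightarrow> i \<le> d \<longrightarrow> cong1 c E \<and> fps_X * fps_deriv E = E * (fps_const (of_nat i * w i) * fps_X ^ i)"
    proof (cases "1 \<le> i \<and> i \<le> d")
      case True
      then show ?thesis using exp_piece[OF inj _ FD[OF wc]] by blast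
    next
      case False then show ?thesis by blast
    qed
  qed
  then obtain Ef where Ef: "\<And>i. 1 \<le> i \<Longrightarrow> i \<le> d \<Longrightarrow> cong1 c (Ef i) \<and> fps_X * fps_deriv (Ef i) = Ef i * (fps_const (of_nat i * w i) * fps_X ^ i)"
    by metis
  define G where "G k = (\<Prod>i\<in>{1..k}. Ef i)" for k
  define W where "W k = (\<Sum>i\<in>{1..k}. fps_const (of_nat i * w i) * fps_X ^ i)" for k
  have GW: "k \<le> d \<Longrightarrow> cong1 c (G k) \<and> fps_X * fps_deriv (G k) = G k * W k" for k
  proof (induction k)
    case 0 then show ?case by (simp add: G_def W_def cong1_one)
  next
    case (Suc k)
    have G: "G (Suc k) = Ef (Suc k) * G k" unfolding G_def by (simp add: atLeastAtMostSuc_conv)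
    have W: "W (Suc k) = fps_const (of_nat (Suc k) * w (Suc k)) * fps_X ^ Suc k + W k"
      unfolding W_def by (simp add: atLeastAtMostSuc_conv)
    have IH: "cong1 c (G k)" "fps_X * fps_deriv (G k) = G k * W k" using Suc by auto
    have E: "cong1 c (Ef (Suc k))" "fps_X * fps_deriv (Ef (Suc k)) = Ef (Suc k) * (fps_const (of_nat (Suc k) * w (Suc k)) * fps_X ^ Suc k)"
      using Ef[of "Suc k"] Suc.prems by auto
    have "fps_X * fps_deriv (Ef (Suc k) * G k) = Ef (Suc k) * (fps_X * fps_deriv (G k)) + (fps_X * fps_deriv (Ef (Suc k))) * G k"
      by (simp add: algebra_simps)
    also have "\<dots> = (Ef (Suc k) * G k) * W (Suc k)" unfolding IH(2) E(2) W by (simp add: algebra_simps)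
    finally show ?case unfolding G using cong1_mult[OF E(1) IH(1)] by simp
  qed
  define A where "A = Abs_fps a"
  define U where "U = Abs_fps (\<lambda>i. if i = 0 then 0 else u i)"
  define V where "V = Abs_fps (\<lambda>i. if i = 0 then 0 else v i)"
  have Gd: "cong1 c (G d)" "fps_X * fps_deriv (G d) = G d * W d" using GW[of d] by auto
  have hA: "\<forall>j\<le>d. fps_nth (fps_X * fps_deriv A) j = fps_nth (- (A * U)) j"
  proof (intro allI impI)
    fix j assume j: "j \<le> d"
    show "fps_nth (fps_X * fps_deriv A) j = fps_nth (- (A * U)) j"
    proof (cases "j = 0")
      case True then show ?thesis unfolding U_def by simp
    next
      case False
      have "fps_nth (fps_X * fps_deriv A) j = of_nat j * a j" unfolding Xderiv_nth A_def by simp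
      also have "\<dots> = - (\<Sum>l<j. a l * u (j - l))" using na[of j] False j by (simp add: eq_neg_iff_add_eq_0)
      also have "\<dots> = fps_nth (- (A * U)) j"
      proof -
        have "fps_nth (A * U) j = (\<Sum>l<j. fps_nth A l * u (j - l))" unfolding U_def by (rule conv_last)
        then show ?thesis unfolding A_def by simp
      qed
      finally show ?thesis .
    qed
  qed
  have Wnth: "fps_nth (W d) i = (if 1 \<le> i \<and> i \<le> d then of_nat i * w i else 0)" for i
  proof -
    have "fps_nth (W d) i = (\<Sum>k\<in>{1..d}. if i = k then of_nat k * w k else 0)"
      unfolding W_def fps_sum_nth by (intro sum.cong) auto
    also have "\<dots> = (if 1 \<le> i \<and> i \<le> d then of_nat i * w i else 0)" by (simp add: sum.delta)
    finally show ?thesis .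
  qed
  have hUWV: "\<forall>i\<le>d. fps_nth (U - W d) i = fps_nth V i"
  proof (intro allI impI)
    fix i assume i: "i \<le> d"
    show "fps_nth (U - W d) i = fps_nth V i"
    proof (cases "i = 0")
      case True then show ?thesis unfolding U_def V_def by (simp add: Wnth)
    next
      case False
      then have "u i - of_nat i * w i = v i" using uv[of i] i by (simp add: algebra_simps)
      then show ?thesis unfolding U_def V_def using False i by (simp add: Wnth)
    qed
  qed
  have hAG: "of_nat j * fps_nth (A * G d) j = - fps_nth (A * G d * V) j" if j: "j \<le> d" for j
  proof -
    have "fps_X * fps_deriv (A * G d) = A * (fps_X * fps_deriv (G d)) + G d * (fps_X * fps_deriv A)"
      by (simp add: algebra_simps)
    also have "\<dots> = A * G d * W d + G d * (fps_X * fps_deriv A)" unfolding Gd(2) by (simp add: mult.assoc)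
    finally have e: "fps_X * fps_deriv (A * G d) = A * G d * W d + G d * (fps_X * fps_deriv A)" .
    have "fps_nth (G d * (fps_X * fps_deriv A)) j = fps_nth (G d * (- (A * U))) j"
      by (rule trunc_agree[OF hA j])
    also have "\<dots> = - fps_nth (A * G d * U) j" by (simp add: mult_ac)
    finally have e2: "fps_nth (G d * (fps_X * fps_deriv A)) j = - fps_nth (A * G d * U) j" .
    have "fps_nth (fps_X * fps_deriv (A * G d)) j = fps_nth (A * G d * W d) j - fps_nth (A * G d * U) j"
      unfolding e using e2 by simp
    also have "\<dots> = - fps_nth (A * G d * (U - W d)) j" by (simp add: algebra_simps)
    also have "fps_nth (A * G d * (U - W d)) j = fps_nth (A * G d * V) j" by (rule trunc_agree[OF hUWV j])
    finally show ?thesis unfolding Xderiv_nth .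
  qed
  have G0: "fps_nth (G d) 0 = 1" using Gd(1) unfolding cong1_def by simp
  have uniq: "j \<le> d \<Longrightarrow> fps_nth (A * G d) j = b j" for j
  proof (induction j rule: less_induct)
    case (less j)
    show ?case
    proof (cases "j = 0")
      case True then show ?thesis unfolding A_def using a0 b0 G0 by simp
    next
      case False
      have "of_nat j * fps_nth (A * G d) j = - (\<Sum>l<j. fps_nth (A * G d) l * v (j - l))"
        using hAG[OF less.prems] unfolding V_def conv_last .
      also have "\<dots> = - (\<Sum>l<j. b l * v (j - l))" using less by simp
      also have "\<dots> = of_nat j * b j" using nb[of j] False less.prems by (simp add: add_eq_0_iff2)
      finally have "of_nat j * fps_nth (A * G d) j = of_nat j * b j" .
      moreover have "(of_nat j :: 'a) \<noteq> 0" using inj False by (metis injD of_nat_0)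
      ultimately show ?thesis by simp
    qed
  qed
  have "b m = a m * fps_nth (G d) 0 + (\<Sum>l<m. a l * fps_nth (G d) (m - l))"
    using uniq[OF md] conv_first[of a "G d" m] unfolding A_def by simp
  then have "a m - b m = - (\<Sum>l<m. a l * fps_nth (G d) (m - l))" using G0 by simp
  moreover have "c dvd (\<Sum>l<m. a l * fps_nth (G d) (m - l))"
    using Gd(1) unfolding cong1_def by (intro dvd_sum) auto
  ultimately show ?thesis by simp
qed


lemma pow_mat_add: assumes A: "A \<in> carrier_mat d d"
  shows "A ^\<^sub>m (a + b) = A ^\<^sub>m a * A ^\<^sub>m b"
proof (induction b)
  case 0 then show ?case using A by simp
next
  case (Suc b)
  have "A ^\<^sub>m (a + Suc b) = A ^\<^sub>m (a + b) * A" by simp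
  also have "\<dots> = A ^\<^sub>m a * A ^\<^sub>m b * A" using Suc by simp
  also have "\<dots> = A ^\<^sub>m a * (A ^\<^sub>m b * A)"
    using A by (intro assoc_mult_mat[of _ d d _ d _ d]) auto
  finally show ?case by simp
qed

lemma pow_mat_mult: assumes A: "A \<in> carrier_mat d d"
  shows "(A ^\<^sub>m n) ^\<^sub>m i = A ^\<^sub>m (n * i)"
proof (induction i)
  case 0 then show ?case using A by simp
next
  case (Suc i)
  have "(A ^\<^sub>m n) ^\<^sub>m Suc i = A ^\<^sub>m (n * i) * A ^\<^sub>m n" using Suc by simp
  also have "\<dots> = A ^\<^sub>m (n * i + n)" using pow_mat_add[OF A] by simp
  finally show ?case by (simp add: add.commute)
qed

context dvr
begin

lemma FDc: assumes n: "n \<ge> 1" and x: "of_nat n * pi dvd x"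
  shows "\<exists>q. of_nat (fact m) * q = x ^ m \<and> (m \<ge> 1 \<longrightarrow> of_nat n * pi dvd q)"
proof (cases "m = 0")
  case True then show ?thesis by simp
next
  case False
  define c where "c = (of_nat n * pi :: 'a)"
  have "pi dvd c" unfolding c_def by simp
  then have "of_nat (fact m) dvd c ^ (m - 1)" by (rule fact_dvd)
  then obtain s where s: "c ^ (m - 1) = of_nat (fact m) * s" by (auto elim: dvdE)
  obtain r where r: "x = c * r" using x unfolding c_def by (auto elim: dvdE)
  have "x ^ m = c ^ (m - 1) * c * r ^ m" unfolding r using False
    by (cases m) (simp_all add: power_mult_distrib mult_ac)
  also have "\<dots> = of_nat (fact m) * (s * c * r ^ m)" unfolding s by (simp add: mult_ac)
  finally show ?thesis unfolding c_def by (intro exI[of _ "s * c * r ^ m"]) (auto simp: c_def)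
qed

lemma main_mat:
  fixes M N :: "'a mat"
  assumes M: "M \<in> carrier_mat d d" and N: "N \<in> carrier_mat d d"
    and cong: "\<And>i j. i < d \<Longrightarrow> j < d \<Longrightarrow> pi dvd M $$ (i, j) - N $$ (i, j)"
    and n: "n \<ge> 1"
  shows "of_nat n * pi dvd tr (M ^\<^sub>m n) - tr (N ^\<^sub>m n)"
    and "k \<le> d \<Longrightarrow> of_nat n * pi dvd coeff (char_poly (M ^\<^sub>m n)) (d - k) - coeff (char_poly (N ^\<^sub>m n)) (d - k)"
proof -
  have tc: "of_nat n' * pi dvd tr (M ^\<^sub>m n') - tr (N ^\<^sub>m n')" if "n' \<ge> 1" for n'
    by (rule trace_cong[OF K1 M N cong]) (use that in auto)
  show "of_nat n * pi dvd tr (M ^\<^sub>m n) - tr (N ^\<^sub>m n)" using tc n .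
  assume k: "k \<le> d"
  define X where "X = M ^\<^sub>m n"
  define Y where "Y = N ^\<^sub>m n"
  have X: "X \<in> carrier_mat d d" unfolding X_def using M by simp
  have Y: "Y \<in> carrier_mat d d" unfolding Y_def using N by simp
  define a where "a l = coeff (char_poly X) (d - l)" for l
  define b where "b l = coeff (char_poly Y) (d - l)" for l
  define u where "u i = tr (X ^\<^sub>m i)" for i
  define v where "v i = tr (Y ^\<^sub>m i)" for i
  define w where "w i = of_nat n * pi * (SOME r. u i - v i = of_nat (n * i) * pi * r)" for i
  have uv: "u i - v i = of_nat i * w i" if "1 \<le> i" for i
  proof -
    have "of_nat (n * i) * pi dvd tr (M ^\<^sub>m (n * i)) - tr (N ^\<^sub>m (n * i))"
      using tc[of "n * i"] n that by simp
    then have "of_nat (n * i) * pi dvd u i - v i"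
      unfolding u_def v_def X_def Y_def pow_mat_mult[OF M] pow_mat_mult[OF N] .
    then have "\<exists>r. u i - v i = of_nat (n * i) * pi * r" by (auto elim: dvdE)
    then have "u i - v i = of_nat (n * i) * pi * (SOME r. u i - v i = of_nat (n * i) * pi * r)"
      by (rule someI_ex)
    then show ?thesis unfolding w_def by (simp add: mult_ac)
  qed
  have wc: "of_nat n * pi dvd w i" for i unfolding w_def by simp
  have a0: "a 0 = 1" unfolding a_def using degree_monic_char_poly[OF X] by simp
  have b0: "b 0 = 1" unfolding b_def using degree_monic_char_poly[OF Y] by simp
  have na: "of_nat m * a m + (\<Sum>l<m. a l * u (m - l)) = 0" if "1 \<le> m" "m \<le> d" for m
    unfolding a_def u_def by (rule newton_rec[OF X that])
  have nb: "of_nat m * b m + (\<Sum>l<m. b l * v (m - l)) = 0" if "1 \<le> m" "m \<le> d" for m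
    unfolding b_def v_def by (rule newton_rec[OF Y that])
  have "of_nat n * pi dvd a k - b k"
  proof (rule integrality[where u = u and v = v and w = w and d = d])
    show "inj (of_nat :: nat \<Rightarrow> 'a)" by (rule inj_nat)
    show "\<And>m x. of_nat n * pi dvd x \<Longrightarrow> \<exists>q. of_nat (fact m) * q = x ^ m \<and> (1 \<le> m \<longrightarrow> of_nat n * pi dvd q)"
      using FDc[OF n] by blast
  qed (use a0 b0 na nb uv wc k in auto)
  then show "of_nat n * pi dvd coeff (char_poly (M ^\<^sub>m n)) (d - k) - coeff (char_poly (N ^\<^sub>m n)) (d - k)"
    unfolding a_def b_def X_def Y_def .
qed

end


lemma eval_symfun_cong:
  fixes R S :: "'a::comm_ring_1 poly"
  assumes "\<And>k. c dvd elem_sym R k - elem_sym S k"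
  shows "c dvd eval_symfun f R - eval_symfun f S"
proof (induction f)
  case (SConst x) then show ?case by simp
next
  case (SE x) then show ?case using assms by simp
next
  case (SAdd f g)
  have "eval_symfun (SAdd f g) R - eval_symfun (SAdd f g) S
      = (eval_symfun f R - eval_symfun f S) + (eval_symfun g R - eval_symfun g S)" by simp
  then show ?case using SAdd by (simp only:) (rule dvd_add)
next
  case (SMul f g)
  have "eval_symfun (SMul f g) R - eval_symfun (SMul f g) S
      = eval_symfun f R * (eval_symfun g R - eval_symfun g S) + (eval_symfun f R - eval_symfun f S) * eval_symfun g S"
    by (simp add: algebra_simps)
  then show ?case using SMul by (simp only:) (rule dvd_add[OF dvd_mult dvd_mult2])
qed

lemma companion_carrier: "companion P \<in> carrier_mat (degree P) (degree P)"
  unfolding companion_def Let_def by simp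

lemma companion_entry: "i < degree P \<Longrightarrow> j < degree P \<Longrightarrow>
  companion P $$ (i, j) = (if j = degree P - 1 then - coeff P i else if i = j + 1 then 1 else 0)"
  unfolding companion_def Let_def by simp

theorem proposition6p5:
  fixes p :: nat and \<pi> :: "'a::idom" and P Q :: "'a poly"
  assumes "padic_integer_ring p \<pi>"
    and "divided_power_max_ideal p \<pi>"
    and "monic P" and "monic Q"
    and "\<forall>i. \<pi> dvd (coeff P i - coeff Q i)"
  shows "(\<forall>n \<ge> 1. \<forall>f. of_nat n * \<pi> dvd
            (eval_symfun f (pow_roots_poly P n) - eval_symfun f (pow_roots_poly Q n)))
       \<and> (\<forall>n \<ge> 1. of_nat n * \<pi> dvd (power_sum_poly P n - power_sum_poly Q n))"
proof -
  have pr: "prime p" "\<pi> \<noteq> 0" "\<not> \<pi> dvd 1" "\<forall>x. x \<noteq> 0 \<longrightarrow> (\<exists>u k. u dvd 1 \<and> x = u * \<pi> ^ k)"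
    "inj (of_nat :: nat \<Rightarrow> 'a)" "\<pi> dvd of_nat p"
    using assms(1) unfolding padic_integer_ring_def by auto
  have dp: "of_nat p * \<pi> dvd \<pi> ^ p" using assms(2) unfolding divided_power_max_ideal_def by auto
  interpret D: dvr p \<pi> by unfold_locales (use pr dp in auto)
  have cPQ: "\<pi> dvd coeff P i - coeff Q i" for i using assms(5) by simp
  have degeq: "degree Q = degree P"
  proof (rule ccontr)
    assume ne: "degree Q \<noteq> degree P"
    show False
    proof (cases "degree Q < degree P")
      case True
      then have "coeff Q (degree P) = 0" by (intro coeff_eq_0) simp
      moreover have "coeff P (degree P) = 1" using assms(3) by simp
      ultimately have "\<pi> dvd 1" using cPQ[of "degree P"] by simp
      then show False using pr(3) by simp
    next
      case False
      then have lt: "degree P < degree Q" using ne by simp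
      then have "coeff P (degree Q) = 0" by (intro coeff_eq_0) simp
      moreover have "coeff Q (degree Q) = 1" using assms(4) by simp
      ultimately have "\<pi> dvd - 1" using cPQ[of "degree Q"] by simp
      then show False using pr(3) by simp
    qed
  qed
  define d where "d = degree P"
  define CP where "CP = companion P"
  define CQ where "CQ = companion Q"
  have CP: "CP \<in> carrier_mat d d" unfolding CP_def d_def by (rule companion_carrier)
  have CQ: "CQ \<in> carrier_mat d d" unfolding CQ_def d_def using companion_carrier[of Q] degeq by simp
  have cong: "\<pi> dvd CP $$ (i, j) - CQ $$ (i, j)" if "i < d" "j < d" for i j
  proof -
    have "CP $$ (i, j) - CQ $$ (i, j) = (if j = d - 1 then - (coeff P i - coeff Q i) else 0)"
      unfolding CP_def CQ_def using that companion_entry[of i P j] companion_entry[of i Q j] degeq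
      by (simp add: d_def)
    moreover have "\<pi> dvd - (coeff P i - coeff Q i)" using cPQ[of i] by (simp only: dvd_minus_iff)
    ultimately show ?thesis by simp
  qed
  have part1: "of_nat n * \<pi> dvd eval_symfun f (pow_roots_poly P n) - eval_symfun f (pow_roots_poly Q n)"
    if n: "n \<ge> 1" for n f
  proof (rule eval_symfun_cong)
    fix k
    have PX: "pow_roots_poly P n = char_poly (CP ^\<^sub>m n)" unfolding pow_roots_poly_def CP_def ..
    have QY: "pow_roots_poly Q n = char_poly (CQ ^\<^sub>m n)" unfolding pow_roots_poly_def CQ_def ..
    have dX: "degree (char_poly (CP ^\<^sub>m n)) = d" using degree_monic_char_poly[of "CP ^\<^sub>m n" d] CP by simp
    have dY: "degree (char_poly (CQ ^\<^sub>m n)) = d" using degree_monic_char_poly[of "CQ ^\<^sub>m n" d] CQ by simp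
    show "of_nat n * \<pi> dvd elem_sym (pow_roots_poly P n) k - elem_sym (pow_roots_poly Q n) k"
    proof (cases "k \<le> d")
      case True
      have "of_nat n * \<pi> dvd coeff (char_poly (CP ^\<^sub>m n)) (d - k) - coeff (char_poly (CQ ^\<^sub>m n)) (d - k)"
        by (rule D.main_mat(2)[OF CP CQ cong n True])
      then have "of_nat n * \<pi> dvd (-1) ^ k * (coeff (char_poly (CP ^\<^sub>m n)) (d - k) - coeff (char_poly (CQ ^\<^sub>m n)) (d - k))"
        by simp
      then show ?thesis unfolding PX QY elem_sym_def dX dY using True by (simp add: algebra_simps)
    next
      case False
      then show ?thesis unfolding PX QY elem_sym_def dX dY by simp
    qed
  qed
  have part2: "of_nat n * \<pi> dvd power_sum_poly P n - power_sum_poly Q n" if n: "n \<ge> 1" for n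
  proof -
    have "power_sum_poly P n = tr (CP ^\<^sub>m n)"
      unfolding power_sum_poly_def tr_def CP_def using CP by (simp add: CP_def d_def)
    moreover have "power_sum_poly Q n = tr (CQ ^\<^sub>m n)"
      unfolding power_sum_poly_def tr_def CQ_def using CQ degeq by (simp add: CQ_def d_def)
    ultimately show ?thesis using D.main_mat(1)[OF CP CQ cong n] by simp
  qed
  show ?thesis using part1 part2 by blast
qed


end
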